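(* An L-state $\rho\in\mathscr L$ is an X-state if and only if its Bloch vector $(\rho_I)_{\emptyset\ne I}\in\bigoplus_{\emptyset\ne I}\mathscr V_I$ lies in $X(\mathfrak B)$ for some longitudinal system $\mathfrak B$.
   Context: Let $V_1,\dots,V_n$ be two-dimensional complex vector spaces, $\mathscr V_i=\mathfrak{sl}(V_i)$ with the form $\langle A,B\rangle=\tfrac12\operatorname{tr}(AB)$, and $\mathscr L$ the set of trace-one endomorphisms of $V_1\otimes\cdots\otimes V_n$. An X-state is a $\rho\in\mathscr L$ for which there exist ordered bases $\{e^i_0,e^i_1\}$ of the $V_i$ such that $\rho$ maps the span of the basis tensors $e^1_{\phi(1)}\otimes\cdots\otimes e^n_{\phi(n)}$ ($\phi:\{1,\dots,n\}\to\{0,1\}$) with $\sum\phi(i)$ even into itself, and the span of those with $\sum\phi(i)$ odd into itself. Bloch vector: for $\emptyset\ne I=\{i_1<\dots<i_k\}$, $\mathscr V_I=\mathscr V_{i_1}\otimes\cdots\otimes\mathscr V_{i_k}$ is regarded inside $\mathrm{End}(V_1\otimes\cdots\otimes V_n)$ by tensoring with identities on the other factors; each $\rho\in\mathscr L$ is uniquely $\rho=2^{-n}\mathrm{id}+\sum_{\emptyset\ne I}\rho_I$ with $\rho_I\in\mathscr V_I$. A longitudinal system $\mathfrak B=(\mathscr V_1^\ell,\dots,\mathscr V_n^\ell)$ consists of lines $\mathscr V_i^\ell\subseteq\mathscr V_i$ spanned by vectors $v$ with $\langle v,v\rangle\neq0$; $\mathscr V_i^t=(\mathscr V_i^\ell)^\perp$.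 $\mathscr V_I^e$ is the span of tensors $x_{i_1}\otimes\cdots\otimes x_{i_k}$ with each $x_{i_j}\in\mathscr V_{i_j}^\ell$ or $x_{i_j}\in\mathscr V_{i_j}^t$ and an even number of them transversal; $X(\mathfrak B)=\bigoplus_{\emptyset\ne I}\mathscr V_I^e$. *)

theory Defs
  imports Complex_Main
begin

text \<open>Concrete model: each V_i is C^2 with standard coordinates indexed by bool
(False = 0, True = 1); the factors are numbered 0..n-1.  Basis tensors / coordinates
of V_1 (x) ... (x) V_n are indexed by bool lists of length n.  Vectors are functions
bool list => complex, endomorphisms are matrices bool list => bool list => complex
(row index first), required to vanish outside the index set.\<close>

type_synonym vec = "bool list \<Rightarrow> complex"
type_synonym op = "bool list \<Rightarrow> bool list \<Rightarrow> complex"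
type_synonym m2 = "bool \<Rightarrow> bool \<Rightarrow> complex"

definition idx :: "nat \<Rightarrow> bool list set" where
  "idx n = {xs. length xs = n}"

definition opapp :: "nat \<Rightarrow> op \<Rightarrow> vec \<Rightarrow> vec" where
  "opapp n A v = (\<lambda>xs. \<Sum>ys\<in>idx n. A xs ys * v ys)"

definition trace_op :: "nat \<Rightarrow> op \<Rightarrow> complex" where
  "trace_op n A = (\<Sum>xs\<in>idx n. A xs xs)"

definition Lset :: "nat \<Rightarrow> op set" where
  "Lset n = {\<rho>. (\<forall>xs ys. xs \<notin> idx n \<or> ys \<notin> idx n \<longrightarrow> \<rho> xs ys = 0)
                 \<and> trace_op n \<rho> = 1}"

definition basis2 :: "(bool \<Rightarrow> complex) \<Rightarrow> (bool \<Rightarrow> complex) \<Rightarrow> bool" where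
  "basis2 e0 e1 \<longleftrightarrow> (\<forall>a b. (\<forall>t. a * e0 t + b * e1 t = 0) \<longrightarrow> a = 0 \<and> b = 0)"

text \<open>Basis tensor e^1_{phi(1)} (x) ... (x) e^n_{phi(n)}, where e i b is e^i_b.\<close>
definition etens :: "nat \<Rightarrow> (nat \<Rightarrow> bool \<Rightarrow> bool \<Rightarrow> complex) \<Rightarrow> bool list \<Rightarrow> vec" where
  "etens n e \<phi> = (\<lambda>xs. if xs \<in> idx n then (\<Prod>i<n. e i (\<phi> ! i) (xs ! i)) else 0)"

definition parity :: "bool list \<Rightarrow> bool" where
  "parity \<phi> = even (length (filter id \<phi>))"

definition X_state :: "nat \<Rightarrow> op \<Rightarrow> bool" where
  "X_state n \<rho> \<longleftrightarrow> (\<exists>e. (\<forall>i<n. basis2 (e i False) (e i True)) \<and>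
     (\<forall>\<phi>\<in>idx n. \<exists>c. opapp n \<rho> (etens n e \<phi>) =
        (\<lambda>xs. \<Sum>\<psi>\<in>{\<psi>\<in>idx n. parity \<psi> = parity \<phi>}. c \<psi> * etens n e \<psi> xs)))"

definition cspan :: "op set \<Rightarrow> op set" where
  "cspan S = {f. \<exists>F c. finite F \<and> F \<subseteq> S \<and> f = (\<lambda>xs ys. \<Sum>g\<in>F. c g * g xs ys)}"

definition id2 :: m2 where
  "id2 = (\<lambda>a b. if a = b then 1 else 0)"

definition sl2 :: "m2 set" where
  "sl2 = {A. A False False + A True True = 0}"

definition form2 :: "m2 \<Rightarrow> m2 \<Rightarrow> complex" where
  "form2 A B = (\<Sum>a\<in>UNIV. \<Sum>b\<in>UNIV. A a b * B b a) / 2"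

definition optens :: "nat \<Rightarrow> (nat \<Rightarrow> m2) \<Rightarrow> op" where
  "optens n A = (\<lambda>xs ys. if xs \<in> idx n \<and> ys \<in> idx n
                         then (\<Prod>i<n. A i (xs ! i) (ys ! i)) else 0)"

definition idop :: "nat \<Rightarrow> op" where
  "idop n = optens n (\<lambda>_. id2)"

definition Isets :: "nat \<Rightarrow> nat set set" where
  "Isets n = Pow {..<n} - {{}}"

text \<open>V_I regarded inside End(V_1 (x) ... (x) V_n) (identities on factors outside I).\<close>
definition VI :: "nat \<Rightarrow> nat set \<Rightarrow> op set" where
  "VI n I = cspan {optens n A | A. (\<forall>i\<in>I. A i \<in> sl2) \<and> (\<forall>i<n. i \<notin> I \<longrightarrow> A i = id2)}"

definition bloch :: "nat \<Rightarrow> op \<Rightarrow> nat set \<Rightarrow> op" where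
  "bloch n \<rho> = (THE f. (\<forall>I\<in>Isets n. f I \<in> VI n I) \<and> (\<forall>I. I \<notin> Isets n \<longrightarrow> f I = (\<lambda>_ _. 0)) \<and>
       \<rho> = (\<lambda>xs ys. idop n xs ys / 2 ^ n + (\<Sum>I\<in>Isets n. f I xs ys)))"

text \<open>Longitudinal lines: V_i^l is spanned by v i, with v i in sl2 and <v,v> \<noteq> 0.\<close>
definition long_sys :: "nat \<Rightarrow> (nat \<Rightarrow> m2) \<Rightarrow> bool" where
  "long_sys n v \<longleftrightarrow> (\<forall>i<n. v i \<in> sl2 \<and> form2 (v i) (v i) \<noteq> 0)"

definition long_line :: "m2 \<Rightarrow> m2 set" where
  "long_line w = {(\<lambda>a b. c * w a b) | c. True}"

definition trans_space :: "m2 \<Rightarrow> m2 set" where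
  "trans_space w = {x \<in> sl2. \<forall>y\<in>long_line w. form2 x y = 0}"

definition VIe :: "nat \<Rightarrow> (nat \<Rightarrow> m2) \<Rightarrow> nat set \<Rightarrow> op set" where
  "VIe n v I = cspan {optens n A | A. (\<forall>i<n. i \<notin> I \<longrightarrow> A i = id2) \<and>
      (\<exists>T\<subseteq>I. even (card T) \<and> (\<forall>i\<in>I. (i \<in> T \<longrightarrow> A i \<in> trans_space (v i)) \<and>
                                         (i \<notin> T \<longrightarrow> A i \<in> long_line (v i))))}"

end

theory Submission
  imports Defs
begin


lemma idx_Suc: "idx (Suc n) = (\<lambda>(b,ys). b # ys) ` (UNIV \<times> idx n)"
  unfolding idx_def by (auto simp: image_def length_Suc_conv)

lemma finite_idx[simp]: "finite (idx n)"
proof (induction n)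
  case 0 then show ?case by (simp add: idx_def)
next
  case (Suc n) then show ?case by (simp add: idx_Suc)
qed

lemma sum_prod_idx:
  "(\<Sum>ys\<in>idx n. \<Prod>i<n. f i (ys ! i)) = (\<Prod>i<n. \<Sum>b\<in>UNIV. (f i b :: complex))"
proof (induction n arbitrary: f)
  case 0 then show ?case by (simp add: idx_def)
next
  case (Suc n)
  have inj: "inj_on (\<lambda>(b,ys). b # ys) (UNIV \<times> idx n)"
    by (auto simp: inj_on_def)
  have "(\<Sum>ys\<in>idx (Suc n). \<Prod>i<Suc n. f i (ys ! i))
      = (\<Sum>(b,ys)\<in>UNIV \<times> idx n. \<Prod>i<Suc n. f i ((b#ys) ! i))"
    unfolding idx_Suc by (subst sum.reindex[OF inj]) (simp add: case_prod_unfold)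
  also have "\<dots> = (\<Sum>b\<in>UNIV. \<Sum>ys\<in>idx n. f 0 b * (\<Prod>i<n. f (Suc i) (ys ! i)))"
    by (simp del: prod.lessThan_Suc add: sum.cartesian_product[symmetric] prod.lessThan_Suc_shift)
  also have "\<dots> = (\<Sum>b\<in>UNIV. f 0 b) * (\<Prod>i<n. \<Sum>b\<in>UNIV. f (Suc i) b)"
    by (simp add: sum_distrib_left[symmetric] sum_distrib_right Suc.IH[where f="\<lambda>i. f (Suc i)"])
  also have "\<dots> = (\<Prod>i<Suc n. \<Sum>b\<in>UNIV. f i b)"
    by (simp del: prod.lessThan_Suc add: prod.lessThan_Suc_shift)
  finally show ?case .
qed

lemma sum2_prod_idx:
  "(\<Sum>xs\<in>idx n. \<Sum>ys\<in>idx n. \<Prod>i<n. g i (xs ! i) (ys ! i))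
   = (\<Prod>i<n. \<Sum>a\<in>UNIV. \<Sum>b\<in>UNIV. (g i a b :: complex))"
proof -
  have "(\<Sum>ys\<in>idx n. \<Prod>i<n. g i (xs ! i) (ys ! i)) = (\<Prod>i<n. \<Sum>b\<in>UNIV. g i (xs ! i) b)" for xs
    by (rule sum_prod_idx[where f="\<lambda>i b. g i (xs ! i) b"])
  then show ?thesis
    using sum_prod_idx[where f="\<lambda>i a. \<Sum>b\<in>UNIV. g i a b"] by simp
qed



definition kmap :: "nat \<Rightarrow> (bool list \<Rightarrow> bool list \<Rightarrow> bool list \<Rightarrow> bool list \<Rightarrow> complex) \<Rightarrow> op \<Rightarrow> op" where
  "kmap n K X = (\<lambda>xs ys. \<Sum>xs'\<in>idx n. \<Sum>ys'\<in>idx n. K xs ys xs' ys' * X xs' ys')"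

lemma kmap_lin:
  assumes "finite F"
  shows "kmap n K (\<lambda>xs ys. \<Sum>g\<in>F. c g * h g xs ys) = (\<lambda>xs ys. \<Sum>g\<in>F. c g * kmap n K (h g) xs ys)"
proof (intro ext)
  fix xs ys
  have "kmap n K (\<lambda>xs ys. \<Sum>g\<in>F. c g * h g xs ys) xs ys
      = (\<Sum>xs'\<in>idx n. \<Sum>ys'\<in>idx n. \<Sum>g\<in>F. c g * (K xs ys xs' ys' * h g xs' ys'))"
    by (simp add: kmap_def sum_distrib_left mult_ac)
  also have "\<dots> = (\<Sum>g\<in>F. \<Sum>xs'\<in>idx n. \<Sum>ys'\<in>idx n. c g * (K xs ys xs' ys' * h g xs' ys'))"
    by (simp add: sum.swap[of _ F] sum.swap[of _ F "idx n"])
  also have "\<dots> = (\<Sum>g\<in>F. c g * kmap n K (h g) xs ys)"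
    by (simp add: kmap_def sum_distrib_left)
  finally show "kmap n K (\<lambda>xs ys. \<Sum>g\<in>F. c g * h g xs ys) xs ys = (\<Sum>g\<in>F. c g * kmap n K (h g) xs ys)" .
qed

lemma kmap_add: "kmap n K (\<lambda>xs ys. X xs ys + Y xs ys) = (\<lambda>xs ys. kmap n K X xs ys + kmap n K Y xs ys)"
  by (simp add: kmap_def algebra_simps sum.distrib)

lemma kmap_scale: "kmap n K (\<lambda>xs ys. c * X xs ys) = (\<lambda>xs ys. c * kmap n K X xs ys)"
  by (simp add: kmap_def sum_distrib_left mult_ac)

lemma kmap_sum:
  assumes "finite F"
  shows "kmap n K (\<lambda>xs ys. \<Sum>g\<in>F. h g xs ys) = (\<lambda>xs ys. \<Sum>g\<in>F. kmap n K (h g) xs ys)"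
  using kmap_lin[OF assms, of n K "\<lambda>_. 1" h] by simp

lemma cspan_zero: "(\<lambda>_ _. 0) \<in> cspan S"
  unfolding cspan_def by (rule CollectI, rule exI[of _ "{}"]) auto

lemma cspan_gen: "g \<in> S \<Longrightarrow> g \<in> cspan S"
  unfolding cspan_def by (rule CollectI, rule exI[of _ "{g}"], rule exI[of _ "\<lambda>_. 1"]) auto

lemma cspan_scale: "f \<in> cspan S \<Longrightarrow> (\<lambda>xs ys. a * f xs ys) \<in> cspan S"
  unfolding cspan_def
proof (elim CollectE exE conjE, intro CollectI)
  fix F c assume "finite F" "F \<subseteq> S" "f = (\<lambda>xs ys. \<Sum>g\<in>F. c g * g xs ys)"
  then show "\<exists>F c. finite F \<and> F \<subseteq> S \<and> (\<lambda>xs ys. a * f xs ys) = (\<lambda>xs ys. \<Sum>g\<in>F. c g * g xs ys)"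
    by (intro exI[of _ F] exI[of _ "\<lambda>g. a * c g"]) (auto simp: sum_distrib_left mult_ac)
qed

lemma cspan_add: "f \<in> cspan S \<Longrightarrow> h \<in> cspan S \<Longrightarrow> (\<lambda>xs ys. f xs ys + h xs ys) \<in> cspan S"
  unfolding cspan_def
proof (elim CollectE exE conjE, intro CollectI)
  fix F c G d assume F: "finite F" "F \<subseteq> S" "f = (\<lambda>xs ys. \<Sum>g\<in>F. c g * g xs ys)"
    and G: "finite G" "G \<subseteq> S" "h = (\<lambda>xs ys. \<Sum>g\<in>G. d g * g xs ys)"
  let ?c = "\<lambda>g. (if g \<in> F then c g else 0) + (if g \<in> G then d g else 0)"
  have "(\<Sum>g\<in>F \<union> G. ?c g * g xs ys) = (\<Sum>g\<in>F. c g * g xs ys) + (\<Sum>g\<in>G. d g * g xs ys)" for xs ys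
  proof -
    have "(\<Sum>g\<in>F \<union> G. ?c g * g xs ys) = (\<Sum>g\<in>F \<union> G. (if g \<in> F then c g * g xs ys else 0))
         + (\<Sum>g\<in>F \<union> G. (if g \<in> G then d g * g xs ys else 0))"
    proof -
      have "?c g * g xs ys = (if g \<in> F then c g * g xs ys else 0) + (if g \<in> G then d g * g xs ys else 0)" for g
        by (simp add: distrib_right)
      then show ?thesis by (simp add: sum.distrib[symmetric])
    qed
    also have "\<dots> = (\<Sum>g\<in>F. c g * g xs ys) + (\<Sum>g\<in>G. d g * g xs ys)"
      by (simp add: sum.inter_restrict[symmetric] F G Int_absorb1 Int_absorb2 Un_Int_eq)
    finally show ?thesis .
  qed
  then show "\<exists>Fa ca. finite Fa \<and> Fa \<subseteq> S \<and> (\<lambda>xs ys. f xs ys + h xs ys) = (\<lambda>xs ys. \<Sum>g\<in>Fa. ca g * g xs ys)"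
    using F G by (intro exI[of _ "F \<union> G"] exI[of _ ?c]) auto
qed

lemma cspan_sum:
  assumes "finite K" "\<And>k. k \<in> K \<Longrightarrow> h k \<in> cspan S"
  shows "(\<lambda>xs ys. \<Sum>k\<in>K. c k * h k xs ys) \<in> cspan S"
  using assms
proof (induction K rule: finite_induct)
  case empty then show ?case by (simp add: cspan_zero)
next
  case (insert k K)
  have "(\<lambda>xs ys. c k * h k xs ys + (\<Sum>k\<in>K. c k * h k xs ys)) \<in> cspan S"
    by (rule cspan_add) (use insert in \<open>auto intro: cspan_scale\<close>)
  then show ?case using insert by simp
qed

lemma cspan_sum1:
  assumes "finite K" "\<And>k. k \<in> K \<Longrightarrow> h k \<in> cspan S"
  shows "(\<lambda>xs ys. \<Sum>k\<in>K. h k xs ys) \<in> cspan S"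
  using cspan_sum[OF assms, where c="\<lambda>_. 1"] by simp

lemma cspan_image:
  assumes lin: "\<And>F c. finite F \<Longrightarrow> F \<subseteq> S \<Longrightarrow> L (\<lambda>xs ys. \<Sum>g\<in>F. c g * g xs ys) = (\<lambda>xs ys. \<Sum>g\<in>F. c g * L g xs ys)"
    and gen: "\<And>g. g \<in> S \<Longrightarrow> L g \<in> cspan S'"
    and f: "f \<in> cspan S"
  shows "L f \<in> cspan S'"
  using f unfolding cspan_def[of S]
proof (elim CollectE exE conjE)
  fix F c assume "finite F" "F \<subseteq> S" "f = (\<lambda>xs ys. \<Sum>g\<in>F. c g * g xs ys)"
  then show ?thesis using lin gen by (auto intro!: cspan_sum)
qed

lemma kmap_cspan:
  assumes "\<And>g. g \<in> S \<Longrightarrow> kmap n K g \<in> cspan S'" "f \<in> cspan S"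
  shows "kmap n K f \<in> cspan S'"
  by (rule cspan_image[OF kmap_lin assms])

lemma cspan_fix:
  assumes lin: "\<And>F c. finite F \<Longrightarrow> F \<subseteq> S \<Longrightarrow> L (\<lambda>xs ys. \<Sum>g\<in>F. c g * g xs ys) = (\<lambda>xs ys. \<Sum>g\<in>F. c g * L g xs ys)"
    and gen: "\<And>g. g \<in> S \<Longrightarrow> L g = g"
    and f: "f \<in> cspan S"
  shows "L f = f"
  using f unfolding cspan_def[of S]
proof (elim CollectE exE conjE)
  fix F c assume "finite F" "F \<subseteq> S" "f = (\<lambda>xs ys. \<Sum>g\<in>F. c g * g xs ys)"
  then have "L f = (\<lambda>xs ys. \<Sum>g\<in>F. c g * L g xs ys)" using lin by simp
  also have "\<dots> = f" using \<open>F \<subseteq> S\<close> \<open>f = _\<close> gen by (auto intro!: sum.cong ext)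
  finally show ?thesis .
qed

lemma optens_cong: "(\<And>i. i < n \<Longrightarrow> A i = B i) \<Longrightarrow> optens n A = optens n B"
  unfolding optens_def by (intro ext) auto

lemma optens_out: "xs \<notin> idx n \<or> ys \<notin> idx n \<Longrightarrow> optens n A xs ys = 0"
  unfolding optens_def by auto

lemma optens_scale: "optens n (\<lambda>i a b. c i * A i a b) = (\<lambda>xs ys. (\<Prod>i<n. c i) * optens n A xs ys)"
  unfolding optens_def by (intro ext) (simp add: prod.distrib)

lemma optens_zero: assumes "i < n" "A i = (\<lambda>a b. 0)" shows "optens n A = (\<lambda>_ _. 0)"
proof (intro ext)
  fix xs ys
  have "A i (xs!i) (ys!i) = 0" using assms by simp
  then show "optens n A xs ys = 0" unfolding optens_def using assms(1)
    by (auto simp: prod_zero_iff)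
qed

lemma kmap_prod:
  assumes K: "\<And>xs ys xs' ys'. xs' \<in> idx n \<Longrightarrow> ys' \<in> idx n \<Longrightarrow>
     K xs ys xs' ys' = (if xs \<in> idx n \<and> ys \<in> idx n then \<Prod>i<n. k i (xs!i) (ys!i) (xs'!i) (ys'!i) else 0)"
  shows "kmap n K (optens n A) = optens n (\<lambda>i x y. \<Sum>a\<in>UNIV. \<Sum>b\<in>UNIV. k i x y a b * A i a b)"
proof (intro ext)
  fix xs ys
  show "kmap n K (optens n A) xs ys = optens n (\<lambda>i x y. \<Sum>a\<in>UNIV. \<Sum>b\<in>UNIV. k i x y a b * A i a b) xs ys"
  proof (cases "xs \<in> idx n \<and> ys \<in> idx n")
    case True
    have "kmap n K (optens n A) xs ys = (\<Sum>xs'\<in>idx n. \<Sum>ys'\<in>idx n.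
        \<Prod>i<n. k i (xs!i) (ys!i) (xs'!i) (ys'!i) * A i (xs'!i) (ys'!i))"
      unfolding kmap_def using True by (intro sum.cong refl) (simp add: K optens_def prod.distrib)
    also have "\<dots> = optens n (\<lambda>i x y. \<Sum>a\<in>UNIV. \<Sum>b\<in>UNIV. k i x y a b * A i a b) xs ys"
      using True sum2_prod_idx[where g="\<lambda>i a b. k i (xs!i) (ys!i) a b * A i a b"] by (simp add: optens_def)
    finally show ?thesis .
  next
    case False
    then have "kmap n K (optens n A) xs ys = 0" unfolding kmap_def by (auto simp: K intro!: sum.neutral)
    then show ?thesis using False by (simp add: optens_out)
  qed
qed

lemma optens_expand:
  assumes S: "S \<subseteq> {..<n}" and A: "\<And>i. i \<in> S \<Longrightarrow> A i = (\<lambda>a b. B i a b + C i a b)"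
  shows "optens n A = (\<lambda>xs ys. \<Sum>T\<in>Pow S. optens n (\<lambda>i. if i \<in> T then C i else if i \<in> S then B i else A i) xs ys)"
proof (intro ext)
  fix xs ys
  show "optens n A xs ys = (\<Sum>T\<in>Pow S. optens n (\<lambda>i. if i \<in> T then C i else if i \<in> S then B i else A i) xs ys)"
  proof (cases "xs \<in> idx n \<and> ys \<in> idx n")
    case False
    then have z: "\<And>B. optens n B xs ys = 0" using optens_out by blast
    then show ?thesis by (simp add: z)
  next
    case True
    have fS: "finite S" using S finite_subset by blast
    have split: "{..<n} = S \<union> ({..<n} - S)" using S by auto
    have "optens n A xs ys = (\<Prod>i\<in>S. A i (xs!i) (ys!i)) * (\<Prod>i\<in>{..<n} - S. A i (xs!i) (ys!i))"
      using True fS by (simp add: optens_def prod.union_disjoint[symmetric] Un_Diff_cancel Un_absorb1[OF S])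
    also have "(\<Prod>i\<in>S. A i (xs!i) (ys!i)) = (\<Prod>i\<in>S. C i (xs!i) (ys!i) + B i (xs!i) (ys!i))"
      by (intro prod.cong refl) (simp add: A)
    also have "\<dots> = (\<Sum>T\<in>Pow S. (\<Prod>i\<in>T. C i (xs!i) (ys!i)) * (\<Prod>i\<in>S - T. B i (xs!i) (ys!i)))"
      by (rule prod_add[OF fS])
    finally have 1: "optens n A xs ys = (\<Sum>T\<in>Pow S. (\<Prod>i\<in>T. C i (xs!i) (ys!i)) * (\<Prod>i\<in>S - T. B i (xs!i) (ys!i))
        * (\<Prod>i\<in>{..<n} - S. A i (xs!i) (ys!i)))"
      by (simp add: sum_distrib_right)
    show ?thesis unfolding 1
    proof (intro sum.cong refl)
      fix T assume T: "T \<in> Pow S"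
      have "optens n (\<lambda>i. if i \<in> T then C i else if i \<in> S then B i else A i) xs ys
         = (\<Prod>i<n. (if i \<in> T then C i else if i \<in> S then B i else A i) (xs!i) (ys!i))"
        using True by (simp add: optens_def)
      also have "\<dots> = (\<Prod>i<n. if i \<in> T then C i (xs!i) (ys!i) else if i \<in> S then B i (xs!i) (ys!i) else A i (xs!i) (ys!i))"
        by (intro prod.cong refl) auto
      also have "\<dots> = (\<Prod>i\<in>T. C i (xs!i) (ys!i)) * ((\<Prod>i\<in>S - T. B i (xs!i) (ys!i))
        * (\<Prod>i\<in>{..<n} - S. A i (xs!i) (ys!i)))"
      proof -
        have e1: "{..<n} \<inter> T = T" using T S by auto
        have e2: "{..<n} \<inter> - T \<inter> S = S - T" using T S by auto
        have e3: "{..<n} \<inter> - T \<inter> - S = {..<n} - S" using T S by auto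
        show ?thesis
          by (simp add: prod.If_cases e1 e2 e3 Int_assoc[symmetric])
      qed
      finally show "(\<Prod>i\<in>T. C i (xs!i) (ys!i)) * (\<Prod>i\<in>S - T. B i (xs!i) (ys!i)) * (\<Prod>i\<in>{..<n} - S. A i (xs!i) (ys!i))
          = optens n (\<lambda>i. if i \<in> T then C i else if i \<in> S then B i else A i) xs ys"
        by (simp add: mult.assoc)
    qed
  qed
qed



definition pi0 :: "m2 \<Rightarrow> m2" where
  "pi0 A = (\<lambda>a b. if a = b then (A False False + A True True) / 2 else 0)"
definition pi1 :: "m2 \<Rightarrow> m2" where
  "pi1 A = (\<lambda>a b. A a b - pi0 A a b)"
definition Eu :: "bool \<Rightarrow> bool \<Rightarrow> m2" where
  "Eu a' b' = (\<lambda>a b. if a = a' \<and> b = b' then 1 else 0)"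
definition Kt :: "nat set \<Rightarrow> bool list \<Rightarrow> bool list \<Rightarrow> nat \<Rightarrow> m2" where
  "Kt J xs' ys' = (\<lambda>i. if i \<in> J then pi1 (Eu (xs'!i) (ys'!i)) else pi0 (Eu (xs'!i) (ys'!i)))"
definition Pj :: "nat \<Rightarrow> nat set \<Rightarrow> op \<Rightarrow> op" where
  "Pj n J X = kmap n (\<lambda>xs ys xs' ys'. optens n (Kt J xs' ys') xs ys) X"

lemma sum_bool: "(\<Sum>b\<in>UNIV. f b) = f False + (f True :: complex)"
  by (simp add: UNIV_bool)

lemma pi0_lin: "(\<Sum>a\<in>UNIV. \<Sum>b\<in>UNIV. pi0 (Eu a b) x y * A a b) = pi0 A x y"
  by (cases x; cases y) (simp_all add: sum_bool pi0_def Eu_def)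
lemma pi1_lin: "(\<Sum>a\<in>UNIV. \<Sum>b\<in>UNIV. pi1 (Eu a b) x y * A a b) = pi1 A x y"
  by (cases x; cases y) (simp_all add: sum_bool pi0_def pi1_def Eu_def field_simps)

lemma pi1_id2: "pi1 id2 = (\<lambda>a b. 0)"
  by (auto simp: pi1_def pi0_def id2_def intro!: ext)
lemma pi0_id2: "pi0 id2 = id2"
  by (auto simp: pi0_def id2_def intro!: ext)
lemma pi0_sl2: "A \<in> sl2 \<Longrightarrow> pi0 A = (\<lambda>a b. 0)"
  by (auto simp: pi0_def sl2_def intro!: ext)
lemma pi1_sl2: "A \<in> sl2 \<Longrightarrow> pi1 A = A"
  by (auto simp: pi1_def pi0_sl2 intro!: ext)
lemma pi1_in_sl2: "pi1 A \<in> sl2"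
  by (simp add: sl2_def pi1_def pi0_def)
lemma pi0_Eu: "pi0 (Eu a b) = (\<lambda>x y. ((if a = b then 1 else 0) / 2) * id2 x y)"
  by (auto simp: pi0_def Eu_def id2_def intro!: ext)

lemma Pj_optens: "Pj n J (optens n A) = optens n (\<lambda>i. if i \<in> J then pi1 (A i) else pi0 (A i))"
proof -
  have "Pj n J (optens n A) = optens n (\<lambda>i x y. \<Sum>a\<in>UNIV. \<Sum>b\<in>UNIV.
        (if i \<in> J then pi1 (Eu a b) else pi0 (Eu a b)) x y * A i a b)"
    unfolding Pj_def by (rule kmap_prod) (simp add: optens_def Kt_def)
  also have "\<dots> = optens n (\<lambda>i. if i \<in> J then pi1 (A i) else pi0 (A i))"
    by (intro optens_cong ext) (simp add: pi0_lin pi1_lin)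
  finally show ?thesis .
qed

lemma prod_ind: "(\<Prod>i<(n::nat). if Q i then 1 else 0 :: complex) = (if \<forall>i<n. Q i then 1 else 0)"
  by (induction n) (auto simp: less_Suc_eq)

lemma idx_eq: "xs \<in> idx n \<Longrightarrow> ys \<in> idx n \<Longrightarrow> (xs = ys) = (\<forall>i<n. xs!i = ys!i)"
  by (auto simp: idx_def list_eq_iff_nth_eq)

lemma optens_Eu:
  assumes "xs' \<in> idx n" "ys' \<in> idx n"
  shows "optens n (\<lambda>i. Eu (xs'!i) (ys'!i)) xs ys = (if xs = xs' \<and> ys = ys' then 1 else 0)"
proof (cases "xs \<in> idx n \<and> ys \<in> idx n")
  case True
  have "optens n (\<lambda>i. Eu (xs'!i) (ys'!i)) xs ys = (\<Prod>i<n. if xs!i = xs'!i \<and> ys!i = ys'!i then 1 else 0)"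
    using True by (simp add: optens_def Eu_def)
  also have "\<dots> = (if xs = xs' \<and> ys = ys' then 1 else 0)"
    using True assms idx_eq[of xs n xs'] idx_eq[of ys n ys'] by (auto simp: prod_ind)
  finally show ?thesis .
next
  case False then show ?thesis using assms by (auto simp: optens_def)
qed

lemma ite1: "(if P then 1 else 0) * (x::complex) = (if P then x else 0)" by simp

lemma Lset_out: "\<rho> \<in> Lset n \<Longrightarrow> xs \<notin> idx n \<or> ys \<notin> idx n \<Longrightarrow> \<rho> xs ys = 0"
  by (simp add: Lset_def)

lemma Pj_decomp:
  assumes "\<rho> \<in> Lset n"
  shows "\<rho> = (\<lambda>xs ys. \<Sum>J\<in>Pow {..<n}. Pj n J \<rho> xs ys)"
proof (intro ext)
  fix xs ys
  have exp: "(\<Sum>J\<in>Pow {..<n}. optens n (Kt J xs' ys') xs ys) = optens n (\<lambda>i. Eu (xs'!i) (ys'!i)) xs ys" for xs' ys'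
  proof -
    have e: "optens n (\<lambda>i. Eu (xs'!i) (ys'!i)) = (\<lambda>xs ys. \<Sum>J\<in>Pow {..<n}. optens n
      (\<lambda>i. if i \<in> J then pi1 (Eu (xs'!i) (ys'!i)) else if i \<in> {..<n} then pi0 (Eu (xs'!i) (ys'!i)) else Eu (xs'!i) (ys'!i)) xs ys)"
      by (rule optens_expand[where B="\<lambda>i. pi0 (Eu (xs'!i) (ys'!i))" and C="\<lambda>i. pi1 (Eu (xs'!i) (ys'!i))"])
         (simp_all add: pi1_def)
    have "optens n (\<lambda>i. if i \<in> J then pi1 (Eu (xs'!i) (ys'!i)) else if i \<in> {..<n} then pi0 (Eu (xs'!i) (ys'!i)) else Eu (xs'!i) (ys'!i))
        = optens n (Kt J xs' ys')" for J
      by (rule optens_cong) (simp add: Kt_def)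
    then show ?thesis by (simp add: e)
  qed
  have "(\<Sum>J\<in>Pow {..<n}. Pj n J \<rho> xs ys)
      = (\<Sum>J\<in>Pow {..<n}. \<Sum>xs'\<in>idx n. \<Sum>ys'\<in>idx n. optens n (Kt J xs' ys') xs ys * \<rho> xs' ys')"
    by (simp add: Pj_def kmap_def)
  also have "\<dots> = (\<Sum>xs'\<in>idx n. \<Sum>J\<in>Pow {..<n}. \<Sum>ys'\<in>idx n. optens n (Kt J xs' ys') xs ys * \<rho> xs' ys')"
    by (rule sum.swap)
  also have "\<dots> = (\<Sum>xs'\<in>idx n. \<Sum>ys'\<in>idx n. \<Sum>J\<in>Pow {..<n}. optens n (Kt J xs' ys') xs ys * \<rho> xs' ys')"
    by (intro sum.cong refl) (rule sum.swap)
  also have "\<dots> = (\<Sum>xs'\<in>idx n. \<Sum>ys'\<in>idx n. (\<Sum>J\<in>Pow {..<n}. optens n (Kt J xs' ys') xs ys) * \<rho> xs' ys')"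
    by (simp add: sum_distrib_right)
  also have "\<dots> = (\<Sum>xs'\<in>idx n. \<Sum>ys'\<in>idx n. (if xs = xs' \<and> ys = ys' then 1 else 0) * \<rho> xs' ys')"
    by (intro sum.cong refl) (simp add: exp optens_Eu)
  also have "\<dots> = (\<Sum>xs'\<in>idx n. \<Sum>ys'\<in>idx n. if xs' = xs then (if ys' = ys then \<rho> xs ys else 0) else 0)"
  proof -
    have pw: "(if xs = xs' \<and> ys = ys' then 1 else 0) * \<rho> xs' ys' = (if xs' = xs then (if ys' = ys then \<rho> xs ys else 0) else 0)" for xs' ys'
      by auto
    show ?thesis by (simp only: pw)
  qed
  also have "\<dots> = \<rho> xs ys"
  proof (cases "xs \<in> idx n \<and> ys \<in> idx n")
    case True
    have "(\<Sum>ys'\<in>idx n. if xs' = xs then (if ys' = ys then \<rho> xs ys else 0) else 0) = (if xs' = xs then \<rho> xs ys else 0)" for xs'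
      using True by (cases "xs' = xs") simp_all
    then show ?thesis using True by simp
  next
    case False then show ?thesis using Lset_out[OF assms, of xs ys] by (auto intro!: sum.neutral)
  qed
  finally show "\<rho> xs ys = (\<Sum>J\<in>Pow {..<n}. Pj n J \<rho> xs ys)" ..
qed

lemma Pj_empty:
  assumes "\<rho> \<in> Lset n"
  shows "Pj n {} \<rho> = (\<lambda>xs ys. idop n xs ys / 2 ^ n)"
proof (intro ext)
  fix xs ys
  have k: "optens n (Kt {} xs' ys') xs ys = (if xs' = ys' then 1 / 2 ^ n else 0) * idop n xs ys"
    if "xs' \<in> idx n" "ys' \<in> idx n" for xs' ys'
  proof -
    have "optens n (Kt {} xs' ys') = optens n (\<lambda>i x y. ((if xs'!i = ys'!i then 1 else 0) / 2) * id2 x y)"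
      by (rule optens_cong) (simp add: Kt_def pi0_Eu)
    also have "\<dots> = (\<lambda>xs ys. (\<Prod>i<n. (if xs'!i = ys'!i then 1 else 0) / 2) * idop n xs ys)"
      unfolding idop_def by (rule optens_scale)
    also have "(\<Prod>i<n. (if xs'!i = ys'!i then 1 else 0) / (2::complex)) = (if xs' = ys' then 1 / 2 ^ n else 0)"
      using that by (simp add: prod_dividef prod_ind idx_eq)
    finally show ?thesis by simp
  qed
  have "Pj n {} \<rho> xs ys = (\<Sum>xs'\<in>idx n. \<Sum>ys'\<in>idx n. (if ys' = xs' then \<rho> xs' ys' * (idop n xs ys / 2 ^ n) else 0))"
    unfolding Pj_def kmap_def by (intro sum.cong refl) (auto simp: k)
  also have "\<dots> = (\<Sum>xs'\<in>idx n. \<rho> xs' xs') * (idop n xs ys / 2 ^ n)"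
    by (simp add: sum.delta sum_distrib_right sum_divide_distrib)
  also have "\<dots> = idop n xs ys / 2 ^ n"
    using assms by (simp add: Lset_def trace_op_def)
  finally show "Pj n {} \<rho> xs ys = idop n xs ys / 2 ^ n" .
qed

definition VIgen :: "nat \<Rightarrow> nat set \<Rightarrow> op set" where
  "VIgen n I = {optens n A | A. (\<forall>i\<in>I. A i \<in> sl2) \<and> (\<forall>i<n. i \<notin> I \<longrightarrow> A i = id2)}"

lemma VI_alt: "VI n I = cspan (VIgen n I)"
  by (simp add: VI_def VIgen_def)

lemma Pj_in_VI:
  assumes "J \<in> Isets n"
  shows "Pj n J \<rho> \<in> VI n J"
proof -
  let ?G = "\<lambda>xs' ys' i. if i \<in> J then pi1 (Eu (xs'!i) (ys'!i)) else id2"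
  let ?c = "\<lambda>xs' ys' i. if i \<in> J then 1 else (if xs'!i = ys'!i then 1 else 0) / (2::complex)"
  have "Kt J xs' ys' = (\<lambda>i a b. ?c xs' ys' i * ?G xs' ys' i a b)" for xs' ys'
    by (auto simp: Kt_def pi0_Eu intro!: ext)
  then have opt: "optens n (Kt J xs' ys') = (\<lambda>xs ys. (\<Prod>i<n. ?c xs' ys' i) * optens n (?G xs' ys') xs ys)" for xs' ys'
    by (simp add: optens_scale)
  have gen: "optens n (?G xs' ys') \<in> VI n J" for xs' ys'
    unfolding VI_alt VIgen_def by (rule cspan_gen) (auto simp: pi1_in_sl2)
  have "Pj n J \<rho> = (\<lambda>xs ys. \<Sum>xs'\<in>idx n. 1 * (\<lambda>xs ys. \<Sum>ys'\<in>idx n. (\<rho> xs' ys' * (\<Prod>i<n. ?c xs' ys' i)) * optens n (?G xs' ys') xs ys) xs ys)"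
    unfolding Pj_def kmap_def opt by (simp add: mult_ac)
  also have "\<dots> \<in> VI n J"
    unfolding VI_alt by (intro cspan_sum finite_idx) (use gen[unfolded VI_alt] in simp)
  finally show ?thesis .
qed

lemma cspan_kill:
  assumes lin: "\<And>F c. finite F \<Longrightarrow> F \<subseteq> S \<Longrightarrow> L (\<lambda>xs ys. \<Sum>g\<in>F. c g * g xs ys) = (\<lambda>xs ys. \<Sum>g\<in>F. c g * L g xs ys)"
    and gen: "\<And>g. g \<in> S \<Longrightarrow> L g = (\<lambda>_ _. 0)"
    and f: "f \<in> cspan S"
  shows "L f = (\<lambda>_ _. 0)"
  using f unfolding cspan_def[of S]
proof (elim CollectE exE conjE)
  fix F c assume "finite F" "F \<subseteq> S" "f = (\<lambda>xs ys. \<Sum>g\<in>F. c g * g xs ys)"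
  then have "L f = (\<lambda>xs ys. \<Sum>g\<in>F. c g * L g xs ys)" using lin by simp
  also have "\<dots> = (\<lambda>_ _. 0)" using \<open>F \<subseteq> S\<close> gen by (auto intro!: sum.neutral ext)
  finally show ?thesis .
qed

lemma Isets_sub: "I \<in> Isets n \<Longrightarrow> I \<subseteq> {..<n}"
  by (simp add: Isets_def)
lemma finite_Isets[simp]: "finite (Isets n)"
  by (simp add: Isets_def)

lemma Pj_VI:
  assumes I: "I \<in> Isets n" and J: "J \<in> Isets n" and g: "g \<in> VI n I"
  shows "Pj n J g = (if I = J then g else (\<lambda>_ _. 0))"
proof (cases "I = J")
  case True
  have "Pj n J g = g"
    using g unfolding VI_alt
  proof (rule cspan_fix[rotated 2])
    fix h assume "h \<in> VIgen n I"
    then obtain A where h: "h = optens n A" and A: "\<forall>i\<in>I. A i \<in> sl2" "\<forall>i<n. i \<notin> I \<longrightarrow> A i = id2"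
      by (auto simp: VIgen_def)
    show "Pj n J h = h" unfolding h Pj_optens
      by (rule optens_cong) (use A True in \<open>auto simp: pi1_sl2 pi0_id2\<close>)
  qed (simp add: Pj_def kmap_lin)
  then show ?thesis using True by simp
next
  case False
  have "Pj n J g = (\<lambda>_ _. 0)"
    using g unfolding VI_alt
  proof (rule cspan_kill[rotated 2])
    fix h assume "h \<in> VIgen n I"
    then obtain A where h: "h = optens n A" and A: "\<forall>i\<in>I. A i \<in> sl2" "\<forall>i<n. i \<notin> I \<longrightarrow> A i = id2"
      by (auto simp: VIgen_def)
    obtain i where i: "i < n" "(i \<in> I \<and> i \<notin> J) \<or> (i \<in> J \<and> i \<notin> I)"
      using False Isets_sub[OF I] Isets_sub[OF J] by blast
    show "Pj n J h = (\<lambda>_ _. 0)" unfolding h Pj_optens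
      by (rule optens_zero[OF i(1)]) (use A i in \<open>auto simp: pi1_id2 pi0_sl2\<close>)
  qed (simp add: Pj_def kmap_lin)
  then show ?thesis using False by simp
qed

lemma Pj_idop:
  assumes J: "J \<in> Isets n"
  shows "Pj n J (idop n) = (\<lambda>_ _. 0)"
proof -
  obtain i where "i \<in> J" using J by (auto simp: Isets_def)
  then have "i < n" using Isets_sub[OF J] by auto
  show ?thesis unfolding idop_def Pj_optens
    by (rule optens_zero[OF \<open>i < n\<close>]) (simp add: \<open>i \<in> J\<close> pi1_id2)
qed

lemma Pj_unique:
  assumes f: "\<forall>I\<in>Isets n. f I \<in> VI n I"
    and rho: "\<rho> = (\<lambda>xs ys. idop n xs ys / 2 ^ n + (\<Sum>I\<in>Isets n. f I xs ys))"
    and J: "J \<in> Isets n"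
  shows "f J = Pj n J \<rho>"
proof -
  have kdiv: "kmap n K (\<lambda>xs ys. X xs ys / c) = (\<lambda>xs ys. kmap n K X xs ys / c)" for K X and c :: complex
    by (simp add: kmap_def sum_divide_distrib)
  have "Pj n J \<rho> = (\<lambda>xs ys. Pj n J (\<lambda>xs ys. idop n xs ys / 2 ^ n) xs ys + Pj n J (\<lambda>xs ys. \<Sum>I\<in>Isets n. f I xs ys) xs ys)"
    unfolding rho Pj_def by (rule kmap_add)
  also have "\<dots> = (\<lambda>xs ys. Pj n J (idop n) xs ys / 2 ^ n + (\<Sum>I\<in>Isets n. Pj n J (f I) xs ys))"
    unfolding Pj_def kdiv kmap_sum[OF finite_Isets] by simp
  finally have "Pj n J \<rho> = (\<lambda>xs ys. Pj n J (idop n) xs ys / 2 ^ n + (\<Sum>I\<in>Isets n. Pj n J (f I) xs ys))" .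
  also have "\<dots> = (\<lambda>xs ys. \<Sum>I\<in>Isets n. if I = J then f J xs ys else 0)"
  proof (intro ext)
    fix xs ys
    have e: "Pj n J (f I) xs ys = (if I = J then f J xs ys else 0)" if "I \<in> Isets n" for I
      using Pj_VI[OF that J] f that by auto
    show "Pj n J (idop n) xs ys / 2 ^ n + (\<Sum>I\<in>Isets n. Pj n J (f I) xs ys) = (\<Sum>I\<in>Isets n. if I = J then f J xs ys else 0)"
      by (simp add: Pj_idop[OF J] e cong: sum.cong)
  qed
  also have "\<dots> = f J" using J by (simp add: sum.delta')
  finally show ?thesis ..
qed

lemma bloch_eq:
  assumes "\<rho> \<in> Lset n"
  shows "bloch n \<rho> = (\<lambda>I. if I \<in> Isets n then Pj n I \<rho> else (\<lambda>_ _. 0))"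
  unfolding bloch_def
proof (rule the_equality)
  let ?f = "\<lambda>I. if I \<in> Isets n then Pj n I \<rho> else (\<lambda>_ _. 0)"
  have pow: "Pow {..<n} = insert {} (Isets n)" by (auto simp: Isets_def)
  have "\<rho> = (\<lambda>xs ys. \<Sum>J\<in>Pow {..<n}. Pj n J \<rho> xs ys)" by (rule Pj_decomp[OF assms])
  also have "\<dots> = (\<lambda>xs ys. Pj n {} \<rho> xs ys + (\<Sum>J\<in>Isets n. Pj n J \<rho> xs ys))"
    unfolding pow by (subst sum.insert) (auto simp: Isets_def)
  also have "\<dots> = (\<lambda>xs ys. idop n xs ys / 2 ^ n + (\<Sum>I\<in>Isets n. ?f I xs ys))"
    by (simp add: Pj_empty[OF assms])
  finally have dec: "\<rho> = (\<lambda>xs ys. idop n xs ys / 2 ^ n + (\<Sum>I\<in>Isets n. ?f I xs ys))" .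
  show "(\<forall>I\<in>Isets n. ?f I \<in> VI n I) \<and> (\<forall>I. I \<notin> Isets n \<longrightarrow> ?f I = (\<lambda>_ _. 0)) \<and>
    \<rho> = (\<lambda>xs ys. idop n xs ys / 2 ^ n + (\<Sum>I\<in>Isets n. ?f I xs ys))"
    using dec by (auto simp: Pj_in_VI)
next
  fix f
  assume h: "(\<forall>I\<in>Isets n. f I \<in> VI n I) \<and> (\<forall>I. I \<notin> Isets n \<longrightarrow> f I = (\<lambda>_ _. 0)) \<and>
    \<rho> = (\<lambda>xs ys. idop n xs ys / 2 ^ n + (\<Sum>I\<in>Isets n. f I xs ys))"
  show "f = (\<lambda>I. if I \<in> Isets n then Pj n I \<rho> else (\<lambda>_ _. 0))"
    using h Pj_unique[of n f \<rho>] by (intro ext) auto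
qed

lemma bloch_VI: "\<rho> \<in> Lset n \<Longrightarrow> I \<in> Isets n \<Longrightarrow> bloch n \<rho> I \<in> VI n I"
  by (simp add: bloch_eq Pj_in_VI)

lemma bloch_sum:
  assumes "\<rho> \<in> Lset n"
  shows "\<rho> = (\<lambda>xs ys. idop n xs ys / 2 ^ n + (\<Sum>I\<in>Isets n. bloch n \<rho> I xs ys))"
proof -
  have pow: "Pow {..<n} = insert {} (Isets n)" by (auto simp: Isets_def)
  have "\<rho> = (\<lambda>xs ys. \<Sum>J\<in>Pow {..<n}. Pj n J \<rho> xs ys)" by (rule Pj_decomp[OF assms])
  also have "\<dots> = (\<lambda>xs ys. Pj n {} \<rho> xs ys + (\<Sum>J\<in>Isets n. Pj n J \<rho> xs ys))"
    unfolding pow by (subst sum.insert) (auto simp: Isets_def)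
  also have "\<dots> = (\<lambda>xs ys. idop n xs ys / 2 ^ n + (\<Sum>I\<in>Isets n. bloch n \<rho> I xs ys))"
    by (simp add: Pj_empty[OF assms] bloch_eq[OF assms])
  finally show ?thesis .
qed

lemma bloch_unique:
  assumes "\<rho> \<in> Lset n" "\<forall>I\<in>Isets n. f I \<in> VI n I"
    "\<rho> = (\<lambda>xs ys. idop n xs ys / 2 ^ n + (\<Sum>I\<in>Isets n. f I xs ys))" "I \<in> Isets n"
  shows "f I = bloch n \<rho> I"
  using Pj_unique[OF assms(2,3,4)] assms(4) by (simp add: bloch_eq[OF assms(1)])



definition m2mult :: "m2 \<Rightarrow> m2 \<Rightarrow> m2" where
  "m2mult A B = (\<lambda>a b. \<Sum>c\<in>UNIV. A a c * B c b)"

definition good :: "nat \<Rightarrow> (nat \<Rightarrow> m2) \<Rightarrow> bool" where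
  "good n v \<longleftrightarrow> (\<forall>i<n. v i \<in> sl2 \<and> m2mult (v i) (v i) = id2)"

lemma m2_eqI:
  fixes f g :: m2
  assumes "f False False = g False False" "f False True = g False True"
    "f True False = g True False" "f True True = g True True"
  shows "f = g"
proof (intro ext)
  fix a b show "f a b = g a b" using assms by (cases a; cases b) auto
qed

lemma good_entries:
  assumes "w \<in> sl2" "m2mult w w = id2"
  shows "w True True = - w False False" "w False False * w False False + w False True * w True False = 1"
proof -
  show t: "w True True = - w False False" using assms(1) by (simp add: sl2_def add_eq_0_iff)
  have "m2mult w w False False = 1" using assms(2) by (simp add: id2_def)
  then show "w False False * w False False + w False True * w True False = 1"
    by (simp add: m2mult_def sum_bool)
qed

lemma L1: assumes "w \<in> sl2" "m2mult w w = id2" shows "m2mult w (m2mult id2 w) = id2"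
proof -
  have "m2mult id2 w = w" by (intro ext) (simp add: m2mult_def id2_def sum_bool)
  then show ?thesis using assms by simp
qed

lemma L2: assumes "w \<in> sl2" "m2mult w w = id2" "A \<in> sl2" shows "m2mult w (m2mult A w) \<in> sl2"
proof -
  note e = good_entries[OF assms(1,2)]
  have "A True True = - A False False" using assms(3) by (simp add: sl2_def add_eq_0_iff)
  then show ?thesis using e by (simp add: sl2_def m2mult_def sum_bool algebra_simps)
qed

lemma L5: assumes "w \<in> sl2" "m2mult w w = id2" shows "form2 w w = 1"
proof -
  note e = good_entries[OF assms(1,2)]
  then show ?thesis by (simp add: form2_def sum_bool) algebra
qed

lemma L3: assumes "w \<in> sl2" "m2mult w w = id2" "t \<in> trans_space w"
  shows "m2mult w (m2mult t w) = (\<lambda>a b. - t a b)"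
proof -
  note e = good_entries[OF assms(1,2)]
  have t: "t \<in> sl2" "form2 t w = 0"
  proof -
    have "form2 t (\<lambda>a b. 1 * w a b) = 0" using assms(3) unfolding trans_space_def long_line_def by blast
    then show "t \<in> sl2" "form2 t w = 0" using assms(3) by (simp_all add: trans_space_def)
  qed
  have t1: "t True True = - t False False" using t(1) by (simp add: sl2_def add_eq_0_iff)
  have f: "t False False * w False False + t False True * w True False + t True False * w False True + t True True * w True True = 0"
    using t(2) by (simp add: form2_def sum_bool add.assoc)
  show ?thesis
    apply (rule m2_eqI)
    apply (simp_all add: m2mult_def sum_bool)
    using e t1 f by algebra+
qed

lemma L4: assumes "w \<in> sl2" "m2mult w w = id2"
  shows "m2mult w (m2mult (\<lambda>a b. c * w a b) w) = (\<lambda>a b. c * w a b)"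
proof -
  note e = good_entries[OF assms(1,2)]
  show ?thesis
    apply (rule m2_eqI)
    apply (simp_all add: m2mult_def sum_bool)
    using e by algebra+
qed

lemma L6: assumes "w \<in> sl2" "m2mult w w = id2" "A \<in> sl2"
  shows "(\<lambda>a b. A a b - form2 A w * w a b) \<in> trans_space w"
proof -
  note e = good_entries[OF assms(1,2)]
  have a: "A True True = - A False False" using assms(3) by (simp add: sl2_def add_eq_0_iff)
  have "(\<lambda>a b. A a b - form2 A w * w a b) \<in> sl2"
    using e a by (simp add: sl2_def)
  moreover have "form2 (\<lambda>a b. A a b - form2 A w * w a b) (\<lambda>a b. c * w a b) = 0" for c
    using e a by (simp add: form2_def sum_bool) algebra
  ultimately show ?thesis by (auto simp: trans_space_def long_line_def)
qed



definition conjZ :: "nat \<Rightarrow> (nat \<Rightarrow> m2) \<Rightarrow> op \<Rightarrow> op" where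
  "conjZ n v X = kmap n (\<lambda>xs ys xs' ys'. optens n v xs xs' * optens n v ys' ys) X"

lemma conjZ_optens: "conjZ n v (optens n A) = optens n (\<lambda>i. m2mult (v i) (m2mult (A i) (v i)))"
proof -
  have "conjZ n v (optens n A) = optens n (\<lambda>i x y. \<Sum>a\<in>UNIV. \<Sum>b\<in>UNIV. (v i x a * v i b y) * A i a b)"
    unfolding conjZ_def by (rule kmap_prod) (auto simp: optens_def prod.distrib)
  also have "\<dots> = optens n (\<lambda>i. m2mult (v i) (m2mult (A i) (v i)))"
    by (intro optens_cong ext) (simp add: m2mult_def sum_bool algebra_simps)
  finally show ?thesis .
qed

lemma conjZ_idop: "good n v \<Longrightarrow> conjZ n v (idop n) = idop n"
  unfolding idop_def conjZ_optens by (rule optens_cong) (auto simp: good_def L1)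

lemma prod_sign: "T \<subseteq> {..<(n::nat)} \<Longrightarrow> (\<Prod>i<n. if i \<in> T then -1 else 1 :: complex) = (-1) ^ card T"
proof -
  assume T: "T \<subseteq> {..<n}"
  have "(\<Prod>i<n. if i \<in> T then -1 else 1 :: complex) = (\<Prod>i\<in>{..<n} \<inter> T. -1)"
    using prod.If_cases[of "{..<n}" "\<lambda>i. i \<in> T" "\<lambda>_. -1::complex" "\<lambda>_. 1"] by simp
  also have "{..<n} \<inter> T = T" using T by auto
  finally show ?thesis by simp
qed

lemma conj_sign:
  assumes g: "good n v" and I: "I \<subseteq> {..<n}" and T: "T \<subseteq> I"
    and A1: "\<forall>i<n. i \<notin> I \<longrightarrow> A i = id2"
    and A2: "\<forall>i\<in>I. (i \<in> T \<longrightarrow> A i \<in> trans_space (v i)) \<and> (i \<notin> T \<longrightarrow> A i \<in> long_line (v i))"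
  shows "conjZ n v (optens n A) = (\<lambda>xs ys. (-1) ^ card T * optens n A xs ys)"
proof -
  have "conjZ n v (optens n A) = optens n (\<lambda>i a b. (if i \<in> T then -1 else 1) * A i a b)"
    unfolding conjZ_optens
  proof (rule optens_cong)
    fix i assume i: "i < n"
    have vi: "v i \<in> sl2" "m2mult (v i) (v i) = id2" using g i by (auto simp: good_def)
    show "m2mult (v i) (m2mult (A i) (v i)) = (\<lambda>a b. (if i \<in> T then -1 else 1) * A i a b)"
    proof (cases "i \<in> I")
      case False then show ?thesis using A1 i T L1[OF vi] by auto
    next
      case True
      show ?thesis
      proof (cases "i \<in> T")
        case True then show ?thesis using A2 T L3[OF vi] by auto
      next
        case False
        then obtain c where "A i = (\<lambda>a b. c * v i a b)" using A2 \<open>i \<in> I\<close> by (auto simp: long_line_def)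
        then show ?thesis using L4[OF vi] False by simp
      qed
    qed
  qed
  also have "\<dots> = (\<lambda>xs ys. (-1) ^ card T * optens n A xs ys)"
    using T I by (simp add: optens_scale prod_sign)
  finally show ?thesis .
qed

definition VIegen :: "nat \<Rightarrow> (nat \<Rightarrow> m2) \<Rightarrow> nat set \<Rightarrow> op set" where
  "VIegen n v I = {optens n A | A. (\<forall>i<n. i \<notin> I \<longrightarrow> A i = id2) \<and>
      (\<exists>T\<subseteq>I. even (card T) \<and> (\<forall>i\<in>I. (i \<in> T \<longrightarrow> A i \<in> trans_space (v i)) \<and>
                                         (i \<notin> T \<longrightarrow> A i \<in> long_line (v i))))}"

lemma VIe_alt: "VIe n v I = cspan (VIegen n v I)"
  by (simp add: VIe_def VIegen_def)

lemma conjZ_VIe: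
  assumes g: "good n v" and I: "I \<in> Isets n" and f: "f \<in> VIe n v I"
  shows "conjZ n v f = f"
  using f unfolding VIe_alt
proof (rule cspan_fix[rotated 2])
  fix h assume "h \<in> VIegen n v I"
  then obtain A T where h: "h = optens n A" and A1: "\<forall>i<n. i \<notin> I \<longrightarrow> A i = id2"
    and T: "T \<subseteq> I" "even (card T)"
    and A2: "\<forall>i\<in>I. (i \<in> T \<longrightarrow> A i \<in> trans_space (v i)) \<and> (i \<notin> T \<longrightarrow> A i \<in> long_line (v i))"
    by (auto simp: VIegen_def)
  show "conjZ n v h = h"
    unfolding h conj_sign[OF g Isets_sub[OF I] T(1) A1 A2] using T(2) by simp
qed (simp add: conjZ_def kmap_lin)

lemma conjZ_VI:
  assumes g: "good n v" and I: "I \<in> Isets n" and f: "f \<in> VI n I"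
  shows "conjZ n v f \<in> VI n I"
  using f unfolding VI_alt conjZ_def
proof (rule kmap_cspan[rotated])
  fix h assume "h \<in> VIgen n I"
  then obtain A where h: "h = optens n A" and A: "\<forall>i\<in>I. A i \<in> sl2" "\<forall>i<n. i \<notin> I \<longrightarrow> A i = id2"
    by (auto simp: VIgen_def)
  have "conjZ n v h \<in> VIgen n I"
    unfolding h conjZ_optens VIgen_def
  proof (intro CollectI exI conjI)
    show "\<forall>i\<in>I. m2mult (v i) (m2mult (A i) (v i)) \<in> sl2"
      using A g Isets_sub[OF I] by (auto simp: good_def intro!: L2)
    show "\<forall>i<n. i \<notin> I \<longrightarrow> m2mult (v i) (m2mult (A i) (v i)) = id2"
      using A g by (auto simp: good_def intro!: L1)
  qed simp
  then show "kmap n (\<lambda>xs ys xs' ys'. optens n v xs xs' * optens n v ys' ys) h \<in> cspan (VIgen n I)"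
    unfolding conjZ_def by (rule cspan_gen)
qed



lemma avg_gen:
  assumes g: "good n v" and I: "I \<in> Isets n" and h: "h \<in> VIgen n I"
  shows "(\<lambda>xs ys. (h xs ys + conjZ n v h xs ys) / 2) \<in> VIe n v I"
proof -
  obtain A where hA: "h = optens n A" and A: "\<forall>i\<in>I. A i \<in> sl2" "\<forall>i<n. i \<notin> I \<longrightarrow> A i = id2"
    using h by (auto simp: VIgen_def)
  have In: "I \<subseteq> {..<n}" by (rule Isets_sub[OF I])
  have vi: "v i \<in> sl2" "m2mult (v i) (v i) = id2" if "i \<in> I" for i
    using g In that by (auto simp: good_def)
  define Lg where "Lg i = (\<lambda>a b. form2 (A i) (v i) * v i a b)" for i
  define Tr where "Tr i = (\<lambda>a b. A i a b - form2 (A i) (v i) * v i a b)" for i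
  define AT where "AT T = (\<lambda>i. if i \<in> T then Tr i else if i \<in> I then Lg i else A i)" for T
  have exp: "optens n A = (\<lambda>xs ys. \<Sum>T\<in>Pow I. optens n (AT T) xs ys)"
    unfolding AT_def by (rule optens_expand[OF In]) (auto simp: Lg_def Tr_def)
  have ATc1: "\<forall>i<n. i \<notin> I \<longrightarrow> AT T i = id2" if "T \<subseteq> I" for T
    using A that by (auto simp: AT_def)
  have ATc2: "\<forall>i\<in>I. (i \<in> T \<longrightarrow> AT T i \<in> trans_space (v i)) \<and> (i \<notin> T \<longrightarrow> AT T i \<in> long_line (v i))"
    if "T \<subseteq> I" for T
    using that A vi by (auto simp: AT_def Tr_def Lg_def long_line_def intro!: L6)
  have cs: "conjZ n v (optens n (AT T)) = (\<lambda>xs ys. (-1) ^ card T * optens n (AT T) xs ys)" if "T \<subseteq> I" for T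
    by (rule conj_sign[OF g In that ATc1[OF that] ATc2[OF that]])
  have "conjZ n v h = (\<lambda>xs ys. \<Sum>T\<in>Pow I. conjZ n v (optens n (AT T)) xs ys)"
    unfolding hA exp conjZ_def by (rule kmap_sum) (use In finite_subset in blast)
  also have "\<dots> = (\<lambda>xs ys. \<Sum>T\<in>Pow I. (-1) ^ card T * optens n (AT T) xs ys)"
    using cs by (intro ext sum.cong refl) auto
  finally have ch: "conjZ n v h = (\<lambda>xs ys. \<Sum>T\<in>Pow I. (-1) ^ card T * optens n (AT T) xs ys)" .
  have "(\<lambda>xs ys. (h xs ys + conjZ n v h xs ys) / 2)
      = (\<lambda>xs ys. \<Sum>T\<in>Pow I. (if even (card T) then optens n (AT T) else (\<lambda>_ _. 0)) xs ys)"
    unfolding ch by (subst hA, subst exp) (auto simp: sum.distrib[symmetric] sum_divide_distrib intro!: ext sum.cong)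
  also have "\<dots> \<in> VIe n v I"
  proof (rule cspan_sum1[where S="VIegen n v I", folded VIe_alt])
    show "finite (Pow I)" using In finite_subset by blast
  next
    fix T assume T: "T \<in> Pow I"
    show "(if even (card T) then optens n (AT T) else (\<lambda>_ _. 0)) \<in> VIe n v I"
    proof (cases "even (card T)")
      case True
      have "optens n (AT T) \<in> VIegen n v I"
        unfolding VIegen_def using T True ATc1 ATc2 by blast
      then show ?thesis using True by (simp add: VIe_alt cspan_gen)
    next
      case False then show ?thesis by (simp add: VIe_alt cspan_zero)
    qed
  qed
  finally show ?thesis .
qed

lemma avg_VI:
  assumes g: "good n v" and I: "I \<in> Isets n" and f: "f \<in> VI n I"
  shows "(\<lambda>xs ys. (f xs ys + conjZ n v f xs ys) / 2) \<in> VIe n v I"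
  using f unfolding VI_alt VIe_alt
proof (rule cspan_image[where L="\<lambda>f xs ys. (f xs ys + conjZ n v f xs ys) / 2", rotated 2])
  fix h assume "h \<in> VIgen n I"
  then show "(\<lambda>xs ys. (h xs ys + conjZ n v h xs ys) / 2) \<in> cspan (VIegen n v I)"
    using avg_gen[OF g I] by (simp add: VIe_alt)
next
  fix F :: "op set" and c assume F: "finite F"
  show "(\<lambda>xs ys. ((\<Sum>g\<in>F. c g * g xs ys) + conjZ n v (\<lambda>xs ys. \<Sum>g\<in>F. c g * g xs ys) xs ys) / 2) =
        (\<lambda>xs ys. \<Sum>g\<in>F. c g * ((g xs ys + conjZ n v g xs ys) / 2))"
    unfolding conjZ_def kmap_lin[OF F]
    by (auto simp: sum.distrib[symmetric] sum_divide_distrib algebra_simps intro!: ext sum.cong)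
qed

lemma kmap_decomp:
  "kmap n K (\<lambda>xs ys. X xs ys / c + (\<Sum>I\<in>Isets n. f I xs ys))
   = (\<lambda>xs ys. kmap n K X xs ys / c + (\<Sum>I\<in>Isets n. kmap n K (f I) xs ys))"
proof -
  have kdiv: "kmap n K (\<lambda>xs ys. X xs ys / c) = (\<lambda>xs ys. kmap n K X xs ys / c)"
    by (simp add: kmap_def sum_divide_distrib)
  show ?thesis
    by (subst kmap_add) (simp add: kdiv kmap_sum[OF finite_Isets])
qed

lemma lemmaB:
  assumes g: "good n v" and rho: "\<rho> \<in> Lset n"
  shows "conjZ n v \<rho> = \<rho> \<longleftrightarrow> (\<forall>I\<in>Isets n. bloch n \<rho> I \<in> VIe n v I)"
proof
  assume h: "\<forall>I\<in>Isets n. bloch n \<rho> I \<in> VIe n v I"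
  have "conjZ n v \<rho> = conjZ n v (\<lambda>xs ys. idop n xs ys / 2 ^ n + (\<Sum>I\<in>Isets n. bloch n \<rho> I xs ys))"
    using bloch_sum[OF rho] by simp
  also have "\<dots> = (\<lambda>xs ys. conjZ n v (idop n) xs ys / 2 ^ n + (\<Sum>I\<in>Isets n. conjZ n v (bloch n \<rho> I) xs ys))"
    unfolding conjZ_def by (rule kmap_decomp)
  also have "\<dots> = (\<lambda>xs ys. idop n xs ys / 2 ^ n + (\<Sum>I\<in>Isets n. bloch n \<rho> I xs ys))"
    using h by (simp add: conjZ_idop[OF g] conjZ_VIe[OF g] cong: sum.cong)
  also have "\<dots> = \<rho>" using bloch_sum[OF rho] by simp
  finally show "conjZ n v \<rho> = \<rho>" .
next
  assume c: "conjZ n v \<rho> = \<rho>"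
  define f where "f I = conjZ n v (bloch n \<rho> I)" for I
  have fVI: "\<forall>I\<in>Isets n. f I \<in> VI n I"
    using conjZ_VI[OF g] bloch_VI[OF rho] by (simp add: f_def)
  have "\<rho> = conjZ n v (\<lambda>xs ys. idop n xs ys / 2 ^ n + (\<Sum>I\<in>Isets n. bloch n \<rho> I xs ys))"
    using c bloch_sum[OF rho] by simp
  also have "\<dots> = (\<lambda>xs ys. conjZ n v (idop n) xs ys / 2 ^ n + (\<Sum>I\<in>Isets n. f I xs ys))"
    unfolding conjZ_def f_def by (rule kmap_decomp)
  also have "\<dots> = (\<lambda>xs ys. idop n xs ys / 2 ^ n + (\<Sum>I\<in>Isets n. f I xs ys))"
    by (simp add: conjZ_idop[OF g])
  finally have dec: "\<rho> = (\<lambda>xs ys. idop n xs ys / 2 ^ n + (\<Sum>I\<in>Isets n. f I xs ys))" .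
  show "\<forall>I\<in>Isets n. bloch n \<rho> I \<in> VIe n v I"
  proof
    fix I assume I: "I \<in> Isets n"
    have e: "conjZ n v (bloch n \<rho> I) = bloch n \<rho> I"
      using bloch_unique[OF rho fVI dec I] by (simp add: f_def)
    have "(\<lambda>xs ys. (bloch n \<rho> I xs ys + conjZ n v (bloch n \<rho> I) xs ys) / 2) \<in> VIe n v I"
      by (rule avg_VI[OF g I bloch_VI[OF rho I]])
    then show "bloch n \<rho> I \<in> VIe n v I" unfolding e by simp
  qed
qed



lemma opapp_lin:
  assumes "finite K"
  shows "opapp n X (\<lambda>xs. \<Sum>k\<in>K. c k * w k xs) = (\<lambda>xs. \<Sum>k\<in>K. c k * opapp n X (w k) xs)"
proof (intro ext)
  fix xs
  have "opapp n X (\<lambda>xs. \<Sum>k\<in>K. c k * w k xs) xs = (\<Sum>ys\<in>idx n. \<Sum>k\<in>K. c k * (X xs ys * w k ys))"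
    by (simp add: opapp_def sum_distrib_left mult_ac)
  also have "\<dots> = (\<Sum>k\<in>K. \<Sum>ys\<in>idx n. c k * (X xs ys * w k ys))" by (rule sum.swap)
  also have "\<dots> = (\<Sum>k\<in>K. c k * opapp n X (w k) xs)" by (simp add: opapp_def sum_distrib_left)
  finally show "opapp n X (\<lambda>xs. \<Sum>k\<in>K. c k * w k xs) xs = (\<Sum>k\<in>K. c k * opapp n X (w k) xs)" .
qed

lemma opapp_scale: "opapp n X (\<lambda>xs. a * w xs) = (\<lambda>xs. a * opapp n X w xs)"
  by (simp add: opapp_def sum_distrib_left mult_ac)

lemma opapp_conjZ:
  "opapp n (conjZ n v X) w = opapp n (optens n v) (opapp n X (opapp n (optens n v) w))"
proof (intro ext)
  fix xs
  let ?Z = "optens n v"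
  have "opapp n (conjZ n v X) w xs = (\<Sum>ys\<in>idx n. \<Sum>xs'\<in>idx n. \<Sum>ys'\<in>idx n. ?Z xs xs' * (X xs' ys' * (?Z ys' ys * w ys)))"
    by (simp add: opapp_def conjZ_def kmap_def sum_distrib_right sum_distrib_left mult_ac)
  also have "\<dots> = (\<Sum>xs'\<in>idx n. \<Sum>ys\<in>idx n. \<Sum>ys'\<in>idx n. ?Z xs xs' * (X xs' ys' * (?Z ys' ys * w ys)))"
    by (rule sum.swap)
  also have "\<dots> = (\<Sum>xs'\<in>idx n. \<Sum>ys'\<in>idx n. \<Sum>ys\<in>idx n. ?Z xs xs' * (X xs' ys' * (?Z ys' ys * w ys)))"
    by (rule sum.cong[OF refl], rule sum.swap)
  also have "\<dots> = opapp n (optens n v) (opapp n X (opapp n (optens n v) w)) xs"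
    by (simp add: opapp_def sum_distrib_left)
  finally show "opapp n (conjZ n v X) w xs = opapp n (optens n v) (opapp n X (opapp n (optens n v) w)) xs" .
qed

lemma opapp_etens:
  "opapp n (optens n A) (etens n e \<phi>) = etens n (\<lambda>i c a. \<Sum>b\<in>UNIV. A i a b * e i c b) \<phi>"
proof (intro ext)
  fix xs
  show "opapp n (optens n A) (etens n e \<phi>) xs = etens n (\<lambda>i c a. \<Sum>b\<in>UNIV. A i a b * e i c b) \<phi> xs"
  proof (cases "xs \<in> idx n")
    case True
    have "opapp n (optens n A) (etens n e \<phi>) xs = (\<Sum>ys\<in>idx n. \<Prod>i<n. A i (xs!i) (ys!i) * e i (\<phi>!i) (ys!i))"
      using True by (auto simp: opapp_def optens_def etens_def prod.distrib intro!: sum.cong)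
    also have "\<dots> = etens n (\<lambda>i c a. \<Sum>b\<in>UNIV. A i a b * e i c b) \<phi> xs"
      using True sum_prod_idx[where f="\<lambda>i b. A i (xs!i) b * e i (\<phi>!i) b"] by (simp add: etens_def)
    finally show ?thesis .
  next
    case False then show ?thesis by (simp add: opapp_def optens_def etens_def)
  qed
qed

lemma etens_scale: "etens n (\<lambda>i c a. k i c * e i c a) \<phi> = (\<lambda>xs. (\<Prod>i<n. k i (\<phi>!i)) * etens n e \<phi> xs)"
  by (simp add: etens_def prod.distrib fun_eq_iff)

lemma etens_cong: "(\<And>i. i < n \<Longrightarrow> e i = e' i) \<Longrightarrow> etens n e \<phi> = etens n e' \<phi>"
  by (simp add: etens_def fun_eq_iff)

definition sg :: "bool list \<Rightarrow> complex" where
  "sg \<phi> = (if parity \<phi> then 1 else -1)"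

lemma sign_parity: "(\<Prod>i<length \<phi>. if \<phi>!i then -1 else 1 :: complex) = sg \<phi>"
proof (induction \<phi>)
  case Nil then show ?case by (simp add: sg_def parity_def)
next
  case (Cons b \<phi>)
  have "(\<Prod>i<length (b # \<phi>). if (b # \<phi>)!i then -1 else 1 :: complex)
      = (if b then -1 else 1) * (\<Prod>i<length \<phi>. if \<phi>!i then -1 else 1)"
    by (simp del: prod.lessThan_Suc add: prod.lessThan_Suc_shift)
  also have "\<dots> = sg (b # \<phi>)" using Cons by (simp add: sg_def parity_def)
  finally show ?case .
qed

lemma sg_sq: "sg \<phi> * sg \<phi> = 1" by (simp add: sg_def)

lemma Z_etens:
  assumes eig: "\<And>i c a. i < n \<Longrightarrow> (\<Sum>b\<in>UNIV. v i a b * e i c b) = (if c then -1 else 1) * e i c a"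
    and phi: "\<phi> \<in> idx n"
  shows "opapp n (optens n v) (etens n e \<phi>) = (\<lambda>xs. sg \<phi> * etens n e \<phi> xs)"
proof -
  have "opapp n (optens n v) (etens n e \<phi>) = etens n (\<lambda>i c a. (if c then -1 else 1) * e i c a) \<phi>"
    unfolding opapp_etens by (rule etens_cong) (simp add: eig fun_eq_iff)
  also have "\<dots> = (\<lambda>xs. sg \<phi> * etens n e \<phi> xs)"
    unfolding etens_scale using phi sign_parity[of \<phi>] by (simp add: idx_def)
  finally show ?thesis .
qed

lemma span_etens:
  assumes Q: "\<And>i a c. i < n \<Longrightarrow> (\<Sum>b\<in>UNIV. e i b a * Q i b c) = (if a = c then 1 else 0)"
    and w: "\<And>xs. xs \<notin> idx n \<Longrightarrow> w xs = 0"
  shows "w = (\<lambda>xs. \<Sum>\<psi>\<in>idx n. (\<Sum>ys\<in>idx n. w ys * (\<Prod>i<n. Q i (\<psi>!i) (ys!i))) * etens n e \<psi> xs)"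
proof (intro ext)
  fix xs
  have "(\<Sum>\<psi>\<in>idx n. (\<Sum>ys\<in>idx n. w ys * (\<Prod>i<n. Q i (\<psi>!i) (ys!i))) * etens n e \<psi> xs)
      = (\<Sum>\<psi>\<in>idx n. \<Sum>ys\<in>idx n. w ys * ((\<Prod>i<n. Q i (\<psi>!i) (ys!i)) * etens n e \<psi> xs))"
    by (simp add: sum_distrib_right sum_distrib_left mult_ac)
  also have "\<dots> = (\<Sum>ys\<in>idx n. w ys * (\<Sum>\<psi>\<in>idx n. (\<Prod>i<n. Q i (\<psi>!i) (ys!i)) * etens n e \<psi> xs))"
    by (subst sum.swap) (simp add: sum_distrib_left)
  also have "\<dots> = w xs"
  proof (cases "xs \<in> idx n")
    case True
    have "(\<Sum>\<psi>\<in>idx n. (\<Prod>i<n. Q i (\<psi>!i) (ys!i)) * etens n e \<psi> xs) = (if ys = xs then 1 else 0)"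
      if ys: "ys \<in> idx n" for ys
    proof -
      have "(\<Sum>\<psi>\<in>idx n. (\<Prod>i<n. Q i (\<psi>!i) (ys!i)) * etens n e \<psi> xs)
          = (\<Sum>\<psi>\<in>idx n. \<Prod>i<n. e i (\<psi>!i) (xs!i) * Q i (\<psi>!i) (ys!i))"
        using True by (simp add: etens_def prod.distrib mult_ac)
      also have "\<dots> = (\<Prod>i<n. if xs!i = ys!i then 1 else 0)"
        by (simp add: sum_prod_idx[where f="\<lambda>i b. e i b (xs!i) * Q i b (ys!i)"] Q)
      also have "\<dots> = (if ys = xs then 1 else 0)"
        using True ys idx_eq[of ys n xs] by (auto simp: prod_ind)
      finally show ?thesis .
    qed
    then have "(\<Sum>ys\<in>idx n. w ys * (\<Sum>\<psi>\<in>idx n. (\<Prod>i<n. Q i (\<psi>!i) (ys!i)) * etens n e \<psi> xs))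
       = (\<Sum>ys\<in>idx n. if ys = xs then w xs else 0)" by (intro sum.cong refl) auto
    then show ?thesis using True by simp
  next
    case False then show ?thesis by (simp add: etens_def w)
  qed
  finally show "w xs = (\<Sum>\<psi>\<in>idx n. (\<Sum>ys\<in>idx n. w ys * (\<Prod>i<n. Q i (\<psi>!i) (ys!i))) * etens n e \<psi> xs)" ..
qed

lemma mat_eq_etens:
  assumes Q: "\<And>i a c. i < n \<Longrightarrow> (\<Sum>b\<in>UNIV. e i b a * Q i b c) = (if a = c then 1 else 0)"
    and X: "\<And>xs ys. xs \<notin> idx n \<or> ys \<notin> idx n \<Longrightarrow> X xs ys = 0"
    and Y: "\<And>xs ys. xs \<notin> idx n \<or> ys \<notin> idx n \<Longrightarrow> Y xs ys = 0"
    and eq: "\<And>\<phi>. \<phi> \<in> idx n \<Longrightarrow> opapp n X (etens n e \<phi>) = opapp n Y (etens n e \<phi>)"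
  shows "X = Y"
proof (intro ext)
  fix xs ys
  show "X xs ys = Y xs ys"
  proof (cases "xs \<in> idx n \<and> ys \<in> idx n")
    case True
    define \<delta> where "\<delta> = (\<lambda>zs. if zs = ys then 1 else (0::complex))"
    define d where "d \<psi> = (\<Sum>zs\<in>idx n. \<delta> zs * (\<Prod>i<n. Q i (\<psi>!i) (zs!i)))" for \<psi>
    have dl: "\<delta> = (\<lambda>xs. \<Sum>\<psi>\<in>idx n. d \<psi> * etens n e \<psi> xs)"
      unfolding d_def by (rule span_etens[OF Q]) (use True in \<open>auto simp: \<delta>_def\<close>)
    have XY: "opapp n Z \<delta> xs = Z xs ys" for Z
    proof -
      have "opapp n Z \<delta> xs = (\<Sum>zs\<in>idx n. if zs = ys then Z xs ys else 0)"
        unfolding opapp_def \<delta>_def by (rule sum.cong) auto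
      then show ?thesis using True by simp
    qed
    have "X xs ys = opapp n X \<delta> xs" by (rule XY[symmetric])
    also have "\<dots> = (\<Sum>\<psi>\<in>idx n. d \<psi> * opapp n X (etens n e \<psi>) xs)"
      by (subst dl) (simp add: opapp_lin)
    also have "\<dots> = (\<Sum>\<psi>\<in>idx n. d \<psi> * opapp n Y (etens n e \<psi>) xs)"
      by (intro sum.cong refl) (simp add: eq)
    also have "\<dots> = opapp n Y \<delta> xs"
      by (subst dl) (simp add: opapp_lin)
    also have "\<dots> = Y xs ys" by (rule XY)
    finally show ?thesis .
  next
    case False then show ?thesis using X Y by auto
  qed
qed



lemma basis2_det:
  assumes "basis2 x y"
  shows "x False * y True - x True * y False \<noteq> 0"
proof
  assume d: "x False * y True - x True * y False = 0"
  have B: "\<And>a b. (\<forall>t. a * x t + b * y t = 0) \<Longrightarrow> a = 0 \<and> b = 0"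
    using assms unfolding basis2_def by blast
  show False
  proof (cases "y True = 0 \<and> x True = 0")
    case False
    have "\<forall>t. y True * x t + (- x True) * y t = 0"
    proof
      fix t show "y True * x t + (- x True) * y t = 0"
        using d by (cases t) (simp_all add: algebra_simps)
    qed
    then show False using B[of "y True" "- x True"] False by auto
  next
    case yx: True
    show False
    proof (cases "y False = 0 \<and> x False = 0")
      case False
      have "\<forall>t. y False * x t + (- x False) * y t = 0"
      proof
        fix t show "y False * x t + (- x False) * y t = 0"
          using yx by (cases t) (simp_all add: algebra_simps)
      qed
      then show False using B[of "y False" "- x False"] False by auto
    next
      case True
      have "\<forall>t. 1 * x t + 0 * y t = 0"
      proof
        fix t show "1 * x t + 0 * y t = 0" using yx True by (cases t) simp_all
      qed
      then show False using B[of 1 0] by auto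
    qed
  qed
qed

definition det2 :: "(bool \<Rightarrow> complex) \<Rightarrow> (bool \<Rightarrow> complex) \<Rightarrow> complex" where
  "det2 x y = x False * y True - x True * y False"

definition QM :: "(bool \<Rightarrow> complex) \<Rightarrow> (bool \<Rightarrow> complex) \<Rightarrow> m2" where
  "QM x y = (\<lambda>b c. if b then (if c then x False else - x True) else (if c then - y False else y True))"

definition Qm :: "(bool \<Rightarrow> complex) \<Rightarrow> (bool \<Rightarrow> complex) \<Rightarrow> m2" where
  "Qm x y = (\<lambda>b c. inverse (det2 x y) * QM x y b c)"

lemma Qm_inv:
  assumes "basis2 x y"
  shows "(\<Sum>b\<in>UNIV. (if b then y else x) a * Qm x y b c) = (if a = c then 1 else 0)"
proof -
  have d: "det2 x y \<noteq> 0" using basis2_det[OF assms] by (simp add: det2_def)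
  have "(\<Sum>b\<in>UNIV. (if b then y else x) a * QM x y b c) = (if a = c then det2 x y else 0)"
    by (cases a; cases c) (simp_all add: QM_def sum_bool det2_def algebra_simps)
  moreover have "(\<Sum>b\<in>UNIV. (if b then y else x) a * Qm x y b c) = inverse (det2 x y) * (\<Sum>b\<in>UNIV. (if b then y else x) a * QM x y b c)"
    by (simp add: Qm_def sum_bool algebra_simps)
  ultimately show ?thesis using d by simp
qed

definition VM :: "(bool \<Rightarrow> complex) \<Rightarrow> (bool \<Rightarrow> complex) \<Rightarrow> m2" where
  "VM x y = (\<lambda>a b. if a then (if b then - (x False * y True + x True * y False) else 2 * x True * y True)
      else (if b then - 2 * x False * y False else x False * y True + x True * y False))"

definition vmat :: "(bool \<Rightarrow> complex) \<Rightarrow> (bool \<Rightarrow> complex) \<Rightarrow> m2" where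
  "vmat x y = (\<lambda>a b. inverse (det2 x y) * VM x y a b)"

lemma vmat_good:
  assumes "basis2 x y"
  shows "vmat x y \<in> sl2" "m2mult (vmat x y) (vmat x y) = id2"
    "(\<Sum>b\<in>UNIV. vmat x y a b * (if c then y else x) b) = (if c then -1 else 1) * (if c then y else x) a"
proof -
  have d: "det2 x y \<noteq> 0" using basis2_det[OF assms] by (simp add: det2_def)
  show "vmat x y \<in> sl2" by (simp add: sl2_def vmat_def VM_def algebra_simps)
  have sq: "m2mult (VM x y) (VM x y) = (\<lambda>a b. det2 x y * det2 x y * id2 a b)"
    by (rule m2_eqI) (simp_all add: m2mult_def VM_def id2_def sum_bool det2_def algebra_simps)
  have "m2mult (vmat x y) (vmat x y) = (\<lambda>a b. inverse (det2 x y) * inverse (det2 x y) * m2mult (VM x y) (VM x y) a b)"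
    by (simp add: m2mult_def vmat_def sum_bool algebra_simps)
  moreover have k: "\<And>z. inverse (det2 x y) * inverse (det2 x y) * (det2 x y * det2 x y * z) = z"
    using d by (simp add: field_simps)
  ultimately show "m2mult (vmat x y) (vmat x y) = id2" by (simp only: sq k)
  have ev: "(\<Sum>b\<in>UNIV. VM x y a b * (if c then y else x) b) = det2 x y * ((if c then -1 else 1) * (if c then y else x) a)"
    by (cases a; cases c) (simp_all add: VM_def sum_bool det2_def algebra_simps)
  have "(\<Sum>b\<in>UNIV. vmat x y a b * (if c then y else x) b) = inverse (det2 x y) * (\<Sum>b\<in>UNIV. VM x y a b * (if c then y else x) b)"
    by (simp add: vmat_def sum_bool algebra_simps)
  then show "(\<Sum>b\<in>UNIV. vmat x y a b * (if c then y else x) b) = (if c then -1 else 1) * (if c then y else x) a"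
    using d by (simp only: ev) simp
qed

definition evp :: "m2 \<Rightarrow> bool \<Rightarrow> complex" where
  "evp w = (if w False False + 1 \<noteq> 0 \<or> w True False \<noteq> 0 then (\<lambda>t. if t then w True False else w False False + 1)
            else (\<lambda>t. if t then 1 - w False False else w False True))"
definition evm :: "m2 \<Rightarrow> bool \<Rightarrow> complex" where
  "evm w = (if w False False - 1 \<noteq> 0 \<or> w True False \<noteq> 0 then (\<lambda>t. if t then w True False else w False False - 1)
            else (\<lambda>t. if t then -1 - w False False else w False True))"

lemma evp_eig:
  assumes "w \<in> sl2" "m2mult w w = id2"
  shows "(\<Sum>b\<in>UNIV. w a b * evp w b) = evp w a"
proof -
  note e = good_entries[OF assms]
  show ?thesis
  proof (cases "w False False + 1 \<noteq> 0 \<or> w True False \<noteq> 0")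
    case True
    then have ev: "evp w = (\<lambda>t. if t then w True False else w False False + 1)" by (simp add: evp_def)
    show ?thesis unfolding ev using e by (cases a) (simp_all add: sum_bool algebra_simps)
  next
    case False
    then have ev: "evp w = (\<lambda>t. if t then 1 - w False False else w False True)" by (simp add: evp_def)
    have "w False False + 1 = 0" "w True False = 0" using False by auto
    then have a: "w False False = -1" "w True False = 0" by (simp_all add: eq_neg_iff_add_eq_0)
    show ?thesis unfolding ev using e a by (cases a) (simp_all add: sum_bool algebra_simps)
  qed
qed

lemma evm_eig:
  assumes "w \<in> sl2" "m2mult w w = id2"
  shows "(\<Sum>b\<in>UNIV. w a b * evm w b) = - evm w a"
proof -
  note e = good_entries[OF assms]
  show ?thesis
  proof (cases "w False False - 1 \<noteq> 0 \<or> w True False \<noteq> 0")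
    case True
    then have ev: "evm w = (\<lambda>t. if t then w True False else w False False - 1)" by (simp add: evm_def)
    show ?thesis unfolding ev using e by (cases a) (simp_all add: sum_bool algebra_simps)
  next
    case False
    then have ev: "evm w = (\<lambda>t. if t then -1 - w False False else w False True)" by (simp add: evm_def)
    have a: "w False False = 1" "w True False = 0" using False by auto
    show ?thesis unfolding ev using e a by (cases a) (simp_all add: sum_bool algebra_simps)
  qed
qed

lemma evp_nz: "\<exists>t. evp w t \<noteq> 0"
proof (cases "w False False + 1 \<noteq> 0 \<or> w True False \<noteq> 0")
  case True
  show ?thesis
  proof (cases "w False False + 1 \<noteq> 0")
    case c: True
    then have "evp w False \<noteq> 0" unfolding evp_def by simp
    then show ?thesis by blast
  next
    case c: False
    then have "evp w True \<noteq> 0" using True unfolding evp_def by simp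
    then show ?thesis by blast
  qed
next
  case False
  then have "w False False = -1" by (simp add: eq_neg_iff_add_eq_0)
  then have "evp w True \<noteq> 0" using False unfolding evp_def by simp
  then show ?thesis by blast
qed

lemma evm_nz: "\<exists>t. evm w t \<noteq> 0"
proof (cases "w False False - 1 \<noteq> 0 \<or> w True False \<noteq> 0")
  case True
  show ?thesis
  proof (cases "w False False - 1 \<noteq> 0")
    case c: True
    then have "evm w False \<noteq> 0" unfolding evm_def by simp
    then show ?thesis by blast
  next
    case c: False
    then have "evm w True \<noteq> 0" using True unfolding evm_def by simp
    then show ?thesis by blast
  qed
next
  case False
  then have "w False False = 1" by simp
  then have "evm w True \<noteq> 0" using False unfolding evm_def by simp
  then show ?thesis by blast
qed

lemma eig_basis:
  assumes x: "\<And>a. (\<Sum>b\<in>UNIV. w a b * x b) = x a" and y: "\<And>a. (\<Sum>b\<in>UNIV. w a b * y b) = - y a"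
    and xn: "\<exists>t. x t \<noteq> 0" and yn: "\<exists>t. y t \<noteq> 0"
  shows "basis2 x y"
  unfolding basis2_def
proof (intro allI impI)
  fix \<alpha> \<beta> :: complex assume h: "\<forall>t. \<alpha> * x t + \<beta> * y t = 0"
  have "\<alpha> * x a - \<beta> * y a = 0" for a
  proof -
    have "(\<Sum>b\<in>UNIV. w a b * (\<alpha> * x b + \<beta> * y b)) = \<alpha> * (\<Sum>b\<in>UNIV. w a b * x b) + \<beta> * (\<Sum>b\<in>UNIV. w a b * y b)"
      by (simp add: sum_bool algebra_simps)
    then have "\<alpha> * x a - \<beta> * y a = (\<Sum>b\<in>UNIV. w a b * (\<alpha> * x b + \<beta> * y b))"
      by (simp only: x y) simp
    also have "\<dots> = 0" using h by simp
    finally show ?thesis .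
  qed
  then have "\<alpha> * x a = 0" for a
  proof -
    have "(\<alpha> * x a + \<beta> * y a) + (\<alpha> * x a - \<beta> * y a) = 2 * (\<alpha> * x a)" by (simp add: algebra_simps)
    moreover have h1: "\<alpha> * x a + \<beta> * y a = 0" using h by blast
    moreover have h2: "\<alpha> * x a - \<beta> * y a = 0" by fact
    ultimately have "2 * (\<alpha> * x a) = 0 + 0" by (simp only:)
    then show ?thesis by simp
  qed
  then have a0: "\<alpha> = 0" using xn by auto
  then have "\<beta> = 0" using h yn by auto
  with a0 show "\<alpha> = 0 \<and> \<beta> = 0" by simp
qed



lemma conjZ_out: "xs \<notin> idx n \<or> ys \<notin> idx n \<Longrightarrow> conjZ n v X xs ys = 0"
  unfolding conjZ_def kmap_def by (auto simp: optens_out intro!: sum.neutral)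

lemma sg_par: "parity \<psi> = parity \<phi> \<Longrightarrow> sg \<psi> = sg \<phi>"
  by (simp add: sg_def)

lemma lemmaC1:
  assumes rho: "\<rho> \<in> Lset n" and X: "X_state n \<rho>"
  shows "\<exists>v. good n v \<and> conjZ n v \<rho> = \<rho>"
proof -
  obtain e where B: "\<forall>i<n. basis2 (e i False) (e i True)"
    and P: "\<forall>\<phi>\<in>idx n. \<exists>c. opapp n \<rho> (etens n e \<phi>) =
        (\<lambda>xs. \<Sum>\<psi>\<in>{\<psi>\<in>idx n. parity \<psi> = parity \<phi>}. c \<psi> * etens n e \<psi> xs)"
    using X unfolding X_state_def by blast
  define v where "v i = vmat (e i False) (e i True)" for i
  define Q where "Q i = Qm (e i False) (e i True)" for i
  have ec: "(if c then e i True else e i False) = e i c" for i c by (cases c) auto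
  have good: "good n v" using vmat_good(1,2) B unfolding good_def v_def by blast
  have eig: "(\<Sum>b\<in>UNIV. v i a b * e i c b) = (if c then -1 else 1) * e i c a" if "i < n" for i a c
    using vmat_good(3)[OF B[rule_format, OF that], of a c] by (simp add: v_def ec)
  have Qp: "(\<Sum>b\<in>UNIV. e i b a * Q i b c) = (if a = c then 1 else 0)" if "i < n" for i a c
    using Qm_inv[OF B[rule_format, OF that], of a c] by (simp add: Q_def ec)
  have "conjZ n v \<rho> = \<rho>"
  proof (rule mat_eq_etens[OF Qp])
    fix \<phi> assume phi: "\<phi> \<in> idx n"
    obtain c where c: "opapp n \<rho> (etens n e \<phi>) = (\<lambda>xs. \<Sum>\<psi>\<in>{\<psi>\<in>idx n. parity \<psi> = parity \<phi>}. c \<psi> * etens n e \<psi> xs)"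
      using P phi by blast
    let ?S = "{\<psi>\<in>idx n. parity \<psi> = parity \<phi>}"
    have Zpsi: "opapp n (optens n v) (etens n e \<psi>) = (\<lambda>xs. sg \<phi> * etens n e \<psi> xs)" if "\<psi> \<in> ?S" for \<psi>
      using Z_etens[OF eig, where \<phi>=\<psi>] that sg_par[of \<psi> \<phi>] by auto
    have Zphi: "opapp n (optens n v) (etens n e \<phi>) = (\<lambda>xs. sg \<phi> * etens n e \<phi> xs)"
      by (rule Z_etens[OF eig phi])
    have "opapp n (conjZ n v \<rho>) (etens n e \<phi>) = (\<lambda>xs. sg \<phi> * opapp n (optens n v) (opapp n \<rho> (etens n e \<phi>)) xs)"
      by (simp only: opapp_conjZ Zphi opapp_scale)
    also have "\<dots> = (\<lambda>xs. sg \<phi> * (\<Sum>\<psi>\<in>?S. c \<psi> * (sg \<phi> * etens n e \<psi> xs)))"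
      unfolding c by (subst opapp_lin) (auto simp: Zpsi intro!: sum.cong)
    also have "\<dots> = (\<lambda>xs. \<Sum>\<psi>\<in>?S. c \<psi> * etens n e \<psi> xs)"
    proof (intro ext)
      fix xs
      have "sg \<phi> * (\<Sum>\<psi>\<in>?S. c \<psi> * (sg \<phi> * etens n e \<psi> xs)) = (sg \<phi> * sg \<phi>) * (\<Sum>\<psi>\<in>?S. c \<psi> * etens n e \<psi> xs)"
        by (simp add: sum_distrib_left mult_ac)
      then show "sg \<phi> * (\<Sum>\<psi>\<in>?S. c \<psi> * (sg \<phi> * etens n e \<psi> xs)) = (\<Sum>\<psi>\<in>?S. c \<psi> * etens n e \<psi> xs)"
        by (simp add: sg_sq)
    qed
    also have "\<dots> = opapp n \<rho> (etens n e \<phi>)" using c by simp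
    finally show "opapp n (conjZ n v \<rho>) (etens n e \<phi>) = opapp n \<rho> (etens n e \<phi>)" .
  qed (auto simp: conjZ_out Lset_out[OF rho])
  then show ?thesis using good by blast
qed

lemma lemmaC2:
  assumes rho: "\<rho> \<in> Lset n" and good: "good n v" and cz: "conjZ n v \<rho> = \<rho>"
  shows "X_state n \<rho>"
proof -
  define e where "e i c = (if c then evm (v i) else evp (v i))" for i c
  define Q where "Q i = Qm (e i False) (e i True)" for i
  have vi: "v i \<in> sl2" "m2mult (v i) (v i) = id2" if "i < n" for i using good that by (auto simp: good_def)
  have B: "basis2 (e i False) (e i True)" if "i < n" for i
    unfolding e_def using evp_eig[OF vi[OF that]] evm_eig[OF vi[OF that]] evp_nz evm_nz
    by (intro eig_basis) auto
  have ec: "(if c then e i True else e i False) = e i c" for i c by (cases c) auto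
  have eig: "(\<Sum>b\<in>UNIV. v i a b * e i c b) = (if c then -1 else 1) * e i c a" if "i < n" for i a c
    using evp_eig[OF vi[OF that]] evm_eig[OF vi[OF that]] by (cases c) (simp_all add: e_def)
  have Qp: "(\<Sum>b\<in>UNIV. e i b a * Q i b c) = (if a = c then 1 else 0)" if "i < n" for i a c
    using Qm_inv[OF B[OF that], of a c] by (simp add: Q_def ec)
  have "\<forall>\<phi>\<in>idx n. \<exists>c. opapp n \<rho> (etens n e \<phi>) =
        (\<lambda>xs. \<Sum>\<psi>\<in>{\<psi>\<in>idx n. parity \<psi> = parity \<phi>}. c \<psi> * etens n e \<psi> xs)"
  proof
    fix \<phi> assume phi: "\<phi> \<in> idx n"
    define w where "w = opapp n \<rho> (etens n e \<phi>)"
    define d where "d \<psi> = (\<Sum>ys\<in>idx n. w ys * (\<Prod>i<n. Q i (\<psi>!i) (ys!i)))" for \<psi>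
    have wout: "w xs = 0" if "xs \<notin> idx n" for xs
      using that Lset_out[OF rho] by (simp add: w_def opapp_def)
    have wsp: "w = (\<lambda>xs. \<Sum>\<psi>\<in>idx n. d \<psi> * etens n e \<psi> xs)"
      unfolding d_def by (rule span_etens[OF Qp wout])
    have "w = opapp n (conjZ n v \<rho>) (etens n e \<phi>)" by (simp add: cz w_def)
    also have "\<dots> = (\<lambda>xs. sg \<phi> * opapp n (optens n v) w xs)"
    proof -
      have Zphi: "opapp n (optens n v) (etens n e \<phi>) = (\<lambda>xs. sg \<phi> * etens n e \<phi> xs)"
        by (rule Z_etens[OF eig phi])
      show ?thesis by (simp only: opapp_conjZ Zphi opapp_scale w_def)
    qed
    also have "\<dots> = (\<lambda>xs. sg \<phi> * (\<Sum>\<psi>\<in>idx n. d \<psi> * (sg \<psi> * etens n e \<psi> xs)))"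
      by (subst wsp, subst opapp_lin) (auto simp: Z_etens[OF eig] intro!: sum.cong)
    finally have w2: "w = (\<lambda>xs. sg \<phi> * (\<Sum>\<psi>\<in>idx n. d \<psi> * (sg \<psi> * etens n e \<psi> xs)))" .
    have "w = (\<lambda>xs. \<Sum>\<psi>\<in>{\<psi>\<in>idx n. parity \<psi> = parity \<phi>}. d \<psi> * etens n e \<psi> xs)"
    proof (intro ext)
      fix xs
      have "w xs = (w xs + w xs) / 2" by simp
      also have "\<dots> = ((\<Sum>\<psi>\<in>idx n. d \<psi> * etens n e \<psi> xs) + sg \<phi> * (\<Sum>\<psi>\<in>idx n. d \<psi> * (sg \<psi> * etens n e \<psi> xs))) / 2"
        by (subst (1) wsp, subst w2) simp
      also have "\<dots> = (\<Sum>\<psi>\<in>idx n. d \<psi> * etens n e \<psi> xs * ((1 + sg \<phi> * sg \<psi>) / 2))"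
        by (simp add: sum_distrib_left sum.distrib[symmetric] sum_divide_distrib algebra_simps)
      also have "\<dots> = (\<Sum>\<psi>\<in>idx n. if parity \<psi> = parity \<phi> then d \<psi> * etens n e \<psi> xs else 0)"
        by (intro sum.cong refl) (auto simp: sg_def)
      also have "\<dots> = (\<Sum>\<psi>\<in>{\<psi>\<in>idx n. parity \<psi> = parity \<phi>}. d \<psi> * etens n e \<psi> xs)"
        by (simp add: sum.inter_filter)
      finally show "w xs = (\<Sum>\<psi>\<in>{\<psi>\<in>idx n. parity \<psi> = parity \<phi>}. d \<psi> * etens n e \<psi> xs)" .
    qed
    then show "\<exists>c. opapp n \<rho> (etens n e \<phi>) =
        (\<lambda>xs. \<Sum>\<psi>\<in>{\<psi>\<in>idx n. parity \<psi> = parity \<phi>}. c \<psi> * etens n e \<psi> xs)"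
      unfolding w_def by blast
  qed
  then show ?thesis unfolding X_state_def using B by blast
qed

lemma sl2_sq: "A \<in> sl2 \<Longrightarrow> m2mult A A = (\<lambda>a b. form2 A A * id2 a b)"
proof -
  assume A: "A \<in> sl2"
  have t: "A True True = - A False False" using A by (simp add: sl2_def add_eq_0_iff)
  show ?thesis
    by (rule m2_eqI) (simp_all add: t m2mult_def form2_def id2_def sum_bool algebra_simps)
qed

lemma long_line_scale:
  assumes "k \<noteq> 0"
  shows "long_line (\<lambda>a b. k * w a b) = long_line w"
proof
  show "long_line (\<lambda>a b. k * w a b) \<subseteq> long_line w"
  proof
    fix y assume "y \<in> long_line (\<lambda>a b. k * w a b)"
    then obtain c where y: "y = (\<lambda>a b. c * (k * w a b))" by (auto simp: long_line_def)
    have "y = (\<lambda>a b. (c * k) * w a b)" by (simp add: y mult_ac)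
    then show "y \<in> long_line w" unfolding long_line_def by blast
  qed
  show "long_line w \<subseteq> long_line (\<lambda>a b. k * w a b)"
  proof
    fix y assume "y \<in> long_line w"
    then obtain c where y: "y = (\<lambda>a b. c * w a b)" by (auto simp: long_line_def)
    have "y = (\<lambda>a b. (c / k) * (k * w a b))" using assms by (simp add: y)
    then show "y \<in> long_line (\<lambda>a b. k * w a b)" unfolding long_line_def by blast
  qed
qed

lemma VIe_cong:
  assumes "\<And>i. i \<in> I \<Longrightarrow> long_line (v' i) = long_line (v i)"
  shows "VIe n v' I = VIe n v I"
proof -
  have tr: "\<And>i. i \<in> I \<Longrightarrow> trans_space (v' i) = trans_space (v i)"
    using assms by (simp add: trans_space_def)
  have "VIegen n v' I = VIegen n v I"
    unfolding VIegen_def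
  proof (intro Collect_cong ex_cong1 conj_cong refl)
    fix A T show "(\<forall>i\<in>I. (i \<in> T \<longrightarrow> A i \<in> trans_space (v' i)) \<and> (i \<notin> T \<longrightarrow> A i \<in> long_line (v' i))) =
        (\<forall>i\<in>I. (i \<in> T \<longrightarrow> A i \<in> trans_space (v i)) \<and> (i \<notin> T \<longrightarrow> A i \<in> long_line (v i)))"
      using assms tr by auto
  qed
  then show ?thesis by (simp add: VIe_alt)
qed

lemma lemmaD:
  assumes "long_sys n v"
  shows "\<exists>v'. good n v' \<and> (\<forall>I\<in>Isets n. VIe n v' I = VIe n v I)"
proof -
  define s where "s i = csqrt (form2 (v i) (v i))" for i
  define v' where "v' i = (\<lambda>a b. inverse (s i) * v i a b)" for i
  have vi: "v i \<in> sl2" "form2 (v i) (v i) \<noteq> 0" if "i < n" for i using assms that by (auto simp: long_sys_def)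
  have s0: "s i \<noteq> 0" if "i < n" for i using vi[OF that] by (simp add: s_def)
  have ss: "s i * s i = form2 (v i) (v i)" for i by (simp add: s_def power2_eq_square[symmetric])
  have "good n v'"
    unfolding good_def
  proof (intro allI impI conjI)
    fix i assume i: "i < n"
    show "v' i \<in> sl2" using vi[OF i] by (simp add: v'_def sl2_def distrib_left[symmetric])
    have "m2mult (v' i) (v' i) = (\<lambda>a b. inverse (s i) * inverse (s i) * m2mult (v i) (v i) a b)"
      by (simp add: m2mult_def v'_def sum_bool algebra_simps)
    also have "\<dots> = (\<lambda>a b. (inverse (s i) * inverse (s i) * (s i * s i)) * id2 a b)"
      by (simp add: sl2_sq[OF vi(1)[OF i]] ss mult_ac)
    also have "\<dots> = id2"
    proof -
      have "inverse (s i) * inverse (s i) * (s i * s i) = 1" using s0[OF i] by (simp add: field_simps)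
      then show ?thesis by simp
    qed
    finally show "m2mult (v' i) (v' i) = id2" .
  qed
  moreover have "VIe n v' I = VIe n v I" if "I \<in> Isets n" for I
  proof (rule VIe_cong)
    fix i assume "i \<in> I"
    then have "i < n" using Isets_sub[OF that] by auto
    then have "inverse (s i) \<noteq> 0" using s0 by simp
    then show "long_line (v' i) = long_line (v i)"
      unfolding v'_def by (rule long_line_scale)
  qed
  ultimately show ?thesis by blast
qed

lemma good_long: "good n v \<Longrightarrow> long_sys n v"
  by (auto simp: good_def long_sys_def L5)

theorem lemma4p7:
  fixes n :: nat and \<rho> :: op
  assumes "\<rho> \<in> Lset n"
  shows "X_state n \<rho> \<longleftrightarrow>
         (\<exists>v. long_sys n v \<and> (\<forall>I\<in>Isets n. bloch n \<rho> I \<in> VIe n v I))"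
proof
  assume "X_state n \<rho>"
  then obtain v where g: "good n v" and c: "conjZ n v \<rho> = \<rho>" using lemmaC1[OF assms] by blast
  then have "\<forall>I\<in>Isets n. bloch n \<rho> I \<in> VIe n v I" using lemmaB[OF g assms] by blast
  then show "\<exists>v. long_sys n v \<and> (\<forall>I\<in>Isets n. bloch n \<rho> I \<in> VIe n v I)" using good_long[OF g] by blast
next
  assume "\<exists>v. long_sys n v \<and> (\<forall>I\<in>Isets n. bloch n \<rho> I \<in> VIe n v I)"
  then obtain v where l: "long_sys n v" and h: "\<forall>I\<in>Isets n. bloch n \<rho> I \<in> VIe n v I" by blast
  obtain v' where g: "good n v'" and eq: "\<forall>I\<in>Isets n. VIe n v' I = VIe n v I" using lemmaD[OF l] by blast
  have "\<forall>I\<in>Isets n. bloch n \<rho> I \<in> VIe n v' I" using h eq by simp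
  then have "conjZ n v' \<rho> = \<rho>" using lemmaB[OF g assms] by blast
  then show "X_state n \<rho>" by (rule lemmaC2[OF assms g])
qed


end
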